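(* Let $B_1,B_2$ be two commuting nilpotent operators on a finite-dimensional complex vector space $V$. Then there exist a nilpotent operator $B_2'$ on $V$ and a vector $w\in V$ such that (i) $B_2'$ commutes with $B_1$; (ii) every linear combination $\alpha B_2+\beta B_2'$ ($\alpha,\beta\in\mathbb{C}$) is nilpotent; (iii) $w$ is a cyclic vector for the pair $(B_1,B_2')$, i.e. there is no proper subspace of $V$ invariant under $B_1$ and $B_2'$ and containing $w$. *)

theory Defs
  imports "Jordan_Normal_Form.Matrix"
begin

text \<open>Operators on V = C^n are represented by n x n complex matrices (any n, including 0).\<close>

definition nilpotent_mat :: "'a::semiring_1 mat \<Rightarrow> bool" where
  "nilpotent_mat A \<longleftrightarrow> (\<exists>k. A ^\<^sub>m k = 0\<^sub>m (dim_row A) (dim_col A))"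

definition is_subspace :: "nat \<Rightarrow> complex vec set \<Rightarrow> bool" where
  "is_subspace n W \<longleftrightarrow> W \<subseteq> carrier_vec n \<and> 0\<^sub>v n \<in> W \<and>
     (\<forall>u\<in>W. \<forall>v\<in>W. u + v \<in> W) \<and> (\<forall>c. \<forall>v\<in>W. c \<cdot>\<^sub>v v \<in> W)"

definition invariant_under :: "complex mat \<Rightarrow> complex vec set \<Rightarrow> bool" where
  "invariant_under A W \<longleftrightarrow> (\<forall>v\<in>W. A *\<^sub>v v \<in> W)"

definition cyclic_vector_pair :: "nat \<Rightarrow> complex mat \<Rightarrow> complex mat \<Rightarrow> complex vec \<Rightarrow> bool" where
  "cyclic_vector_pair n A B w \<longleftrightarrow>
     \<not> (\<exists>W. is_subspace n W \<and> W \<noteq> carrier_vec n \<and> invariant_under A W \<and> invariant_under B W \<and> w \<in> W)"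

end

theory Submission
  imports Defs "Jordan_Normal_Form.Jordan_Normal_Form_Existence"
begin

fun blk :: "nat list \<Rightarrow> nat \<Rightarrow> nat" where
  "blk [] x = 0"
| "blk (m # ms) x = (if x < m then 0 else Suc (blk ms (x - m)))"

fun pos :: "nat list \<Rightarrow> nat \<Rightarrow> nat" where
  "pos [] x = x"
| "pos (m # ms) x = (if x < m then x else pos ms (x - m))"

definition st :: "nat list \<Rightarrow> nat \<Rightarrow> nat" where
  "st ms b = sum_list (take b ms)"

lemma st_Cons_Suc[simp]: "st (m # ms) (Suc b) = m + st ms b"
  by (simp add: st_def)
lemma st_0[simp]: "st ms 0 = 0" by (simp add: st_def)

lemma blk_pos: "x < sum_list ms \<Longrightarrow> blk ms x < length ms \<and> pos ms x < ms ! blk ms x \<and> st ms (blk ms x) + pos ms x = x"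
proof (induction ms arbitrary: x)
  case Nil then show ?case by simp
next
  case (Cons m ms)
  show ?case
  proof (cases "x < m")
    case True then show ?thesis by simp
  next
    case False
    with Cons.prems have "x - m < sum_list ms" by simp
    from Cons.IH[OF this] False show ?thesis by auto
  qed
qed

lemma blk_st: "b < length ms \<Longrightarrow> p < ms ! b \<Longrightarrow> blk ms (st ms b + p) = b \<and> pos ms (st ms b + p) = p \<and> st ms b + p < sum_list ms"
proof (induction ms arbitrary: b)
  case Nil then show ?case by simp
next
  case (Cons m ms)
  show ?case
  proof (cases b)
    case 0 then show ?thesis using Cons.prems by simp
  next
    case (Suc b')
    with Cons.prems have "b' < length ms" "p < ms ! b'" by auto
    from Cons.IH[OF this] Suc show ?thesis by simp
  qed
qed

lemma sum_blocks: "(\<Sum>x<sum_list ms. f x) = (\<Sum>b<length ms. \<Sum>p<ms!b. f (st ms b + p))"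
proof (induction ms arbitrary: f)
  case Nil then show ?case by simp
next
  case (Cons m ms)
  have "(\<Sum>x<sum_list (m#ms). f x) = (\<Sum>x<m. f x) + (\<Sum>x<sum_list ms. f (m + x))"
    by (simp add: sum.atLeastLessThan_concat[symmetric] lessThan_atLeast0 sum.shift_bounds_nat_ivl add.commute)
      (metis add.commute sum.atLeastLessThan_concat le_add2 sum.shift_bounds_nat_ivl add_0)
  also have "\<dots> = (\<Sum>b<length (m#ms). \<Sum>p<(m#ms)!b. f (st (m#ms) b + p))"
    unfolding Cons.IH[of "\<lambda>x. f (m + x)"] length_Cons sum.lessThan_Suc_shift by (simp add: add.assoc)
  finally show ?case .
qed

lemma jordan_matrix_entry:
  fixes bl :: "(nat \<times> 'a :: comm_ring_1) list"
  assumes "i < sum_list (map fst bl)" "j < sum_list (map fst bl)"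
  shows "jordan_matrix bl $$ (i,j) = (if blk (map fst bl) i = blk (map fst bl) j then
     (if i = j then snd (bl ! blk (map fst bl) i) else if j = Suc i then 1 else 0) else 0)"
  using assms
proof (induction bl arbitrary: i j)
  case Nil then show ?case by simp
next
  case (Cons na bl)
  obtain n a where na: "na = (n,a)" by force
  have JC: "jordan_matrix ((n,a) # bl) = four_block_mat (jordan_block n a) (0\<^sub>m n (sum_list (map fst bl)))
     (0\<^sub>m (sum_list (map fst bl)) n) (jordan_matrix bl)"
    by (rule jordan_matrix_Cons)
  from Cons.prems na have i: "i < n + sum_list (map fst bl)" and j: "j < n + sum_list (map fst bl)" by auto
  show ?case
  proof (cases "i < n")
    case True
    then show ?thesis using i j unfolding na JC by auto
  next
    case False
    note iF = False
    show ?thesis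
    proof (cases "j < n")
      case True
      then show ?thesis using i j iF unfolding na JC by auto
    next
      case False
      have "i - n < sum_list (map fst bl)" "j - n < sum_list (map fst bl)" using i j iF False by auto
      note IH = Cons.IH[OF this]
      show ?thesis using i j iF False unfolding na JC apply (simp add: IH)
        by auto
    qed
  qed
qed

locale jstr = fixes ms :: "nat list" assumes ms_pos: "\<And>m. m \<in> set ms \<Longrightarrow> 0 < m"
begin

abbreviation "nn \<equiv> sum_list ms"
abbreviation "kk \<equiv> length ms"
abbreviation "bk \<equiv> blk ms"
abbreviation "ps \<equiv> pos ms"
abbreviation "sz b \<equiv> ms ! b"
abbreviation "ix b p \<equiv> st ms b + p"

lemma sz_pos: "b < kk \<Longrightarrow> 0 < sz b" using ms_pos by auto

lemma bp: "x < nn \<Longrightarrow> bk x < kk \<and> ps x < sz (bk x) \<and> ix (bk x) (ps x) = x"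
  by (rule blk_pos)

lemma ixb: "b < kk \<Longrightarrow> p < sz b \<Longrightarrow> bk (ix b p) = b \<and> ps (ix b p) = p \<and> ix b p < nn"
  by (rule blk_st)

lemma ix_inj: "b < kk \<Longrightarrow> p < sz b \<Longrightarrow> b' < kk \<Longrightarrow> p' < sz b' \<Longrightarrow> (ix b p = ix b' p') = (b = b' \<and> p = p')"
  using ixb by metis

definition J0 :: "complex mat" where
  "J0 = mat nn nn (\<lambda>(i,j). if bk i = bk j \<and> ps j = Suc (ps i) then 1 else 0)"

lemma J0_carrier[simp]: "J0 \<in> carrier_mat nn nn" unfolding J0_def by auto
lemma J0_dims[simp]: "dim_row J0 = nn" "dim_col J0 = nn" unfolding J0_def by auto

lemma J0_index: "i < nn \<Longrightarrow> j < nn \<Longrightarrow> J0 $$ (i,j) = (if bk i = bk j \<and> ps j = Suc (ps i) then 1 else 0)"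
  unfolding J0_def by auto

lemma rel_left: assumes "l < nn" "j < nn"
  shows "(bk l = bk j \<and> ps j = Suc (ps l)) = (0 < ps j \<and> l = j - 1)"
proof
  assume a: "bk l = bk j \<and> ps j = Suc (ps l)"
  from bp[OF assms(1)] bp[OF assms(2)] a show "0 < ps j \<and> l = j - 1" by (metis add_Suc_right diff_Suc_1 zero_less_Suc)
next
  assume a: "0 < ps j \<and> l = j - 1"
  from bp[OF assms(2)] have j: "bk j < kk" "ps j < sz (bk j)" "ix (bk j) (ps j) = j" by auto
  have "l = ix (bk j) (ps j - 1)" using a j by auto
  with ixb[of "bk j" "ps j - 1"] j a show "bk l = bk j \<and> ps j = Suc (ps l)" by auto
qed

lemma rel_right: assumes "i < nn" "l < nn"
  shows "(bk i = bk l \<and> ps l = Suc (ps i)) = (Suc (ps i) < sz (bk i) \<and> l = Suc i)"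
proof
  assume a: "bk i = bk l \<and> ps l = Suc (ps i)"
  from bp[OF assms(1)] bp[OF assms(2)] a show "Suc (ps i) < sz (bk i) \<and> l = Suc i" by (metis add_Suc_right)
next
  assume a: "Suc (ps i) < sz (bk i) \<and> l = Suc i"
  from bp[OF assms(1)] have i: "bk i < kk" "ps i < sz (bk i)" "ix (bk i) (ps i) = i" by auto
  have "l = ix (bk i) (Suc (ps i))" using a i by auto
  with ixb[of "bk i" "Suc (ps i)"] i a show "bk i = bk l \<and> ps l = Suc (ps i)" by auto
qed

lemma mult_J0_right: assumes X: "X \<in> carrier_mat nn nn" and i: "i < nn" and j: "j < nn"
  shows "(X * J0) $$ (i,j) = (if 0 < ps j then X $$ (i, j - 1) else 0)"
proof -
  have "(X * J0) $$ (i,j) = (\<Sum>l<nn. X $$ (i,l) * J0 $$ (l,j))"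
    using X i j by (simp add: scalar_prod_def lessThan_atLeast0)
  also have "\<dots> = (\<Sum>l<nn. if l = j - 1 then (if 0 < ps j then X $$ (i, j - 1) else 0) else 0)"
    by (rule sum.cong[OF refl], insert j, auto simp: J0_index rel_left)
  also have "\<dots> = (if 0 < ps j then X $$ (i, j - 1) else 0)"
    using j by (simp add: sum.delta)
  finally show ?thesis .
qed

lemma mult_J0_left: assumes X: "X \<in> carrier_mat nn nn" and i: "i < nn" and j: "j < nn"
  shows "(J0 * X) $$ (i,j) = (if Suc (ps i) < sz (bk i) then X $$ (Suc i, j) else 0)"
proof -
  have "(J0 * X) $$ (i,j) = (\<Sum>l<nn. J0 $$ (i,l) * X $$ (l,j))"
    using X i j by (simp add: scalar_prod_def lessThan_atLeast0)
  also have "\<dots> = (\<Sum>l<nn. if l = Suc i then (if Suc (ps i) < sz (bk i) then X $$ (Suc i, j) else 0) else 0)"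
    by (rule sum.cong[OF refl], insert i, auto simp: J0_index rel_right)
  also have "\<dots> = (if Suc (ps i) < sz (bk i) then X $$ (Suc i, j) else 0)"
  proof (cases "Suc (ps i) < sz (bk i)")
    case True
    with bp[OF i] ixb[of "bk i" "Suc (ps i)"] have "Suc i < nn" by auto
    then show ?thesis by (simp add: sum.delta)
  qed simp
  finally show ?thesis .
qed

definition commJ :: "complex mat \<Rightarrow> bool" where
  "commJ X \<longleftrightarrow> X \<in> carrier_mat nn nn \<and> X * J0 = J0 * X"

lemma KX: assumes X: "commJ X" and b: "b < kk" "p < sz b" and b': "b' < kk" "p' < sz b'"
  shows "(if 0 < p then X $$ (ix b' p', ix b (p - 1)) else 0) =
         (if Suc p' < sz b' then X $$ (ix b' (Suc p'), ix b p) else 0)"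
proof -
  from X have Xc: "X \<in> carrier_mat nn nn" and e: "X * J0 = J0 * X" unfolding commJ_def by auto
  have i: "ix b' p' < nn" and j: "ix b p < nn" using ixb b b' by auto
  have "(X * J0) $$ (ix b' p', ix b p) = (J0 * X) $$ (ix b' p', ix b p)" using e by simp
  then show ?thesis unfolding mult_J0_right[OF Xc i j] mult_J0_left[OF Xc i j]
    using ixb[OF b] ixb[OF b'] by (cases p, auto simp: add.commute)
qed

lemma supp1: assumes X: "commJ X" and b: "b < kk" "p < sz b" and b': "b' < kk" "p' < sz b'"
  and ne: "X $$ (ix b' p', ix b p) \<noteq> 0" shows "p' \<le> p"
  using b(2) b'(2) ne
proof (induction p arbitrary: p')
  case 0
  show ?case
  proof (rule ccontr)
    assume "\<not> p' \<le> 0"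
    then obtain q where q: "p' = Suc q" by (cases p', auto)
    from KX[OF X b(1) 0(1) b'(1), of q] q 0 show False by auto
  qed
next
  case (Suc p)
  show ?case
  proof (rule ccontr)
    assume "\<not> p' \<le> Suc p"
    then obtain q where q: "p' = Suc q" "p < q" by (cases p', auto)
    from KX[OF X b(1) Suc(2) b'(1), of q] q Suc(3,4)
    have "X $$ (ix b' q, ix b p) \<noteq> 0" by auto
    from Suc.IH[OF _ _ this] Suc(2) q Suc(3) show False by auto
  qed
qed

lemma supp2: assumes X: "commJ X" and b: "b < kk" "p < sz b" and b': "b' < kk" "p' < sz b'"
  and ne: "X $$ (ix b' p', ix b p) \<noteq> 0" shows "sz b - p \<le> sz b' - p'"
proof -
  have "\<forall>p p'. sz b' - p' = d \<longrightarrow> p < sz b \<longrightarrow> p' < sz b' \<longrightarrow> X $$ (ix b' p', ix b p) \<noteq> 0 \<longrightarrow> sz b - p \<le> sz b' - p'" for d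
  proof (induction d rule: less_induct)
    case (less d)
    show ?case
    proof (intro allI impI, rule ccontr)
      fix p p'
      assume d: "sz b' - p' = d" and p: "p < sz b" and p': "p' < sz b'" and ne: "X $$ (ix b' p', ix b p) \<noteq> 0"
        and c: "\<not> sz b - p \<le> sz b' - p'"
      have p1: "Suc p < sz b" using c p' by auto
      from KX[OF X b(1) p1 b'(1) p'] ne
      have eq: "X $$ (ix b' p', ix b p) = (if Suc p' < sz b' then X $$ (ix b' (Suc p'), ix b (Suc p)) else 0)" by simp
      show False
      proof (cases "Suc p' < sz b'")
        case True
        with eq ne have ne2: "X $$ (ix b' (Suc p'), ix b (Suc p)) \<noteq> 0" by simp
        have lt: "sz b' - Suc p' < d" using d True by auto
        have "sz b - Suc p \<le> sz b' - Suc p'" by (rule less.IH[OF lt, rule_format, OF refl p1 True ne2])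
        then show False using c p1 True by arith
      next
        case False with eq ne show False by simp
      qed
    qed
  qed
  then show ?thesis using b b' ne by blast
qed

lemma toeplitz: assumes X: "commJ X" and b: "b < kk" "p < sz b" and b': "b' < kk" "p < sz b'"
  shows "X $$ (ix b' p, ix b p) = X $$ (ix b' 0, ix b 0)"
  using b(2) b'(2)
proof (induction p)
  case 0 then show ?case by simp
next
  case (Suc p)
  from KX[OF X b(1) Suc(2) b'(1), of p] Suc(3)
  have "X $$ (ix b' p, ix b p) = X $$ (ix b' (Suc p), ix b (Suc p))" by auto
  with Suc show ?case by auto
qed

end

lemma jordan_col_start:
  fixes bl :: "(nat \<times> complex) list"
  defines "ms \<equiv> map fst bl"
  assumes b: "b < length bl" and i: "i < sum_list ms" and pb: "0 < fst (bl ! b)"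
  shows "jordan_matrix bl $$ (i, st ms b) = (if i = st ms b then snd (bl ! b) else 0)"
proof -
  have b': "b < length ms" "0 < ms ! b" using b pb unfolding ms_def by auto
  from blk_st[OF b'] have x: "blk ms (st ms b) = b" "pos ms (st ms b) = 0" "st ms b < sum_list ms" by auto
  from blk_pos[OF i] have ii: "st ms (blk ms i) + pos ms i = i" by auto
  have le: "blk ms i = b \<Longrightarrow> st ms b \<le> i" using ii by auto
  show ?thesis
    using jordan_matrix_entry[of i bl "st ms b"] i x le unfolding ms_def[symmetric]
    by auto
qed

lemma jordan_pow_col_start:
  fixes bl :: "(nat \<times> complex) list"
  defines "ms \<equiv> map fst bl"
  assumes b: "b < length bl" and pb: "0 < fst (bl ! b)" and i: "i < sum_list ms"
  shows "(jordan_matrix bl ^\<^sub>m t) $$ (i, st ms b) = (if i = st ms b then snd (bl ! b) ^ t else 0)"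
  using i
proof (induction t arbitrary: i)
  case 0
  have "st ms b < sum_list ms" using blk_st[of b ms 0] b pb unfolding ms_def by auto
  then show ?case using 0 by (auto simp: ms_def)
next
  case (Suc t)
  let ?J = "jordan_matrix bl"
  have sb: "st ms b < sum_list ms" using blk_st[of b ms 0] b pb unfolding ms_def by auto
  have J: "?J \<in> carrier_mat (sum_list ms) (sum_list ms)" unfolding ms_def by simp
  have Jt: "?J ^\<^sub>m t \<in> carrier_mat (sum_list ms) (sum_list ms)" using J by simp
  have "(?J ^\<^sub>m Suc t) $$ (i, st ms b) = (?J ^\<^sub>m t * ?J) $$ (i, st ms b)" by simp
  also have "\<dots> = (\<Sum>l<sum_list ms. (?J ^\<^sub>m t) $$ (i,l) * ?J $$ (l, st ms b))"
    using J Jt Suc.prems sb by (simp add: scalar_prod_def lessThan_atLeast0 ms_def)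
  also have "\<dots> = (\<Sum>l<sum_list ms. if l = st ms b then (?J ^\<^sub>m t) $$ (i, st ms b) * snd (bl ! b) else 0)"
    by (rule sum.cong[OF refl], insert jordan_col_start[OF b _ pb], auto simp: ms_def)
  also have "\<dots> = (?J ^\<^sub>m t) $$ (i, st ms b) * snd (bl ! b)" using sb by simp
  finally show ?case using Suc by auto
qed

lemma sim_cancel: fixes P Q X :: "'a :: semiring_1 mat"
  assumes P: "P \<in> carrier_mat m m" and Q: "Q \<in> carrier_mat m m" and X: "X \<in> carrier_mat m m"
    and QP: "Q * P = 1\<^sub>m m"
  shows "Q * (P * X * Q) * P = X"
proof -
  have PX: "P * X \<in> carrier_mat m m" using P X by auto
  have PXQ: "P * X * Q \<in> carrier_mat m m" using PX Q by auto
  have "Q * (P * X * Q) * P = Q * (P * X * Q * P)" by (rule assoc_mult_mat[OF Q PXQ P])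
  also have "P * X * Q * P = P * X * (Q * P)" by (rule assoc_mult_mat[OF PX Q P])
  also have "\<dots> = P * X" using QP right_mult_one_mat[OF PX] by simp
  also have "Q * (P * X) = Q * P * X" by (rule assoc_mult_mat[OF Q P X, symmetric])
  also have "\<dots> = X" using QP X by simp
  finally show ?thesis .
qed

lemma nilp_jordan:
  fixes M :: "complex mat"
  assumes M: "M \<in> carrier_mat m m" and nil: "M ^\<^sub>m N = 0\<^sub>m m m"
  shows "\<exists>ms P Q. jstr ms \<and> sum_list ms = m \<and> P \<in> carrier_mat m m \<and> Q \<in> carrier_mat m m \<and>
     P * Q = 1\<^sub>m m \<and> Q * P = 1\<^sub>m m \<and> M = P * jstr.J0 ms * Q"
proof -
  from char_poly_factorized[OF M] obtain as where "char_poly M = (\<Prod>a\<leftarrow>as. [:- a, 1:])" by auto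
  from jordan_nf_exists[OF M this] obtain bl where jnf: "jordan_nf M bl" by auto
  define ms where "ms = map fst bl"
  from jnf have pos: "0 \<notin> fst ` set bl" and sim: "similar_mat M (jordan_matrix bl)" unfolding jordan_nf_def by auto
  from sim obtain P Q where wit: "similar_mat_wit M (jordan_matrix bl) P Q" unfolding similar_mat_def by auto
  from wit M have cJ: "jordan_matrix bl \<in> carrier_mat m m" and P: "P \<in> carrier_mat m m" and Q: "Q \<in> carrier_mat m m"
    and PQ: "P * Q = 1\<^sub>m m" and QP: "Q * P = 1\<^sub>m m" and MJ: "M = P * jordan_matrix bl * Q"
    unfolding similar_mat_wit_def Let_def by auto
  have m: "sum_list ms = m" using cJ unfolding ms_def by auto
  have js: "jstr ms" unfolding jstr_def ms_def
  proof (intro allI impI)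
    fix x assume "x \<in> set (map fst bl)"
    with pos show "0 < x" by (metis gr0I list.set_map)
  qed
  have Jn: "jordan_matrix bl ^\<^sub>m N = 0\<^sub>m m m"
  proof -
    have "M ^\<^sub>m N = P * jordan_matrix bl ^\<^sub>m N * Q" by (rule similar_mat_wit_pow_id[OF wit])
    then have "Q * (M ^\<^sub>m N) * P = jordan_matrix bl ^\<^sub>m N"
      using sim_cancel[OF P Q pow_carrier_mat[OF cJ, of N] QP] by simp
    then show ?thesis using nil P Q by simp
  qed
  have ev0: "snd (bl ! b) = 0" if b: "b < length bl" for b
  proof -
    have pb: "0 < fst (bl ! b)" using pos b by (metis gr0I image_eqI nth_mem)
    have sb: "st ms b < sum_list ms" using blk_st[of b ms 0] b pb unfolding ms_def by auto
    from jordan_pow_col_start[OF b pb, of "st ms b" N] sb Jn m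
    have "snd (bl ! b) ^ N = 0" unfolding ms_def by auto
    then show ?thesis by simp
  qed
  have JJ: "jordan_matrix bl = jstr.J0 ms"
  proof (rule eq_matI)
    fix i j assume i: "i < dim_row (jstr.J0 ms)" and j: "j < dim_col (jstr.J0 ms)"
    then have i': "i < sum_list ms" and j': "j < sum_list ms" using jstr.J0_dims[OF js] by auto
    from blk_pos[OF i'] blk_pos[OF j'] have
      bi: "st ms (blk ms i) + pos ms i = i" and bj: "st ms (blk ms j) + pos ms j = j" and
      bl: "blk ms i < length bl" by (auto simp: ms_def)
    note E = jstr.J0_index[OF js i' j'] jordan_matrix_entry[OF i'[unfolded ms_def] j'[unfolded ms_def], folded ms_def]
    show "jordan_matrix bl $$ (i, j) = jstr.J0 ms $$ (i, j)"
    proof (cases "blk ms i = blk ms j")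
      case True
      then have "st ms (blk ms i) = st ms (blk ms j)" by simp
      then have "(i = j) = (pos ms i = pos ms j)" "(j = Suc i) = (pos ms j = Suc (pos ms i))"
        using bi bj by linarith+
      then show ?thesis using True ev0[OF bl] unfolding E by auto
    next
      case False then show ?thesis unfolding E by simp
    qed
  qed (insert jstr.J0_dims[OF js], auto simp: ms_def)
  show ?thesis using js m P Q PQ QP MJ unfolding JJ by blast
qed

lemma upt_split3: "i < m \<Longrightarrow> [0..<m] = [0..<i] @ i # [Suc i..<m]"
  using upt_add_eq_append[of 0 i "m - i"] upt_conv_Cons[of i m] by simp

locale colors = fixes k :: nat and c :: "nat \<Rightarrow> nat"
begin

definition L :: "nat \<Rightarrow> nat list" where "L s = filter (\<lambda>i. c i = s) [0..<k]"
abbreviation "ks s \<equiv> length (L s)"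
definition io :: "nat \<Rightarrow> nat" where "io i = length (filter (\<lambda>j. c j = c i) [0..<i])"


lemma io_a: assumes i: "i < k" shows "io i < ks (c i) \<and> L (c i) ! io i = i"
proof -
  have "L (c i) = filter (\<lambda>j. c j = c i) [0..<i] @ i # filter (\<lambda>j. c j = c i) [Suc i..<k]"
    unfolding L_def using upt_split3[OF i] by simp
  then show ?thesis unfolding io_def by (simp add: nth_append)
qed

lemma distinct_L: "distinct (L s)" unfolding L_def by simp
lemma set_L: "set (L s) = {i \<in> {..<k}. c i = s}" unfolding L_def by auto

lemma io_b: assumes t: "t < ks s" shows "L s ! t < k \<and> c (L s ! t) = s \<and> io (L s ! t) = t"
proof -
  have m: "L s ! t \<in> set (L s)" using t by simp
  then have lt: "L s ! t < k" and cs: "c (L s ! t) = s" unfolding set_L by auto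
  from io_a[OF lt] cs have "io (L s ! t) < ks s" "L s ! io (L s ! t) = L s ! t" by auto
  with distinct_L[of s] t have "io (L s ! t) = t" by (simp add: nth_eq_iff_index_eq)
  with lt cs show ?thesis by auto
qed

lemma io_L: "t < ks s \<Longrightarrow> io (L s ! t) = t" using io_b by blast

lemma io_mono: assumes ij: "i < j" "j < k" and c: "c i = c j" shows "io i < io j"
proof -
  have "[0..<j] = [0..<i] @ i # [Suc i..<j]" using upt_split3[of i j] ij by simp
  then show ?thesis unfolding io_def using c by simp
qed

lemma io_inj: assumes i: "i < k" and j: "j < k" and e: "c i = c j" "io i = io j" shows "i = j"
proof -
  have "i = L (c i) ! io i" using io_a[OF i] by simp
  also have "\<dots> = L (c j) ! io j" using e by simp
  also have "\<dots> = j" using io_a[OF j] by simp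
  finally show ?thesis .
qed

lemma reindex: "(\<Sum>l<k. if c l = s then f l else 0) = (\<Sum>t<ks s. f (L s ! t))"
proof -
  have "(\<Sum>l<k. if c l = s then f l else 0) = (\<Sum>l\<in>{l \<in> {..<k}. c l = s}. f l)"
    by (rule sum.inter_filter[symmetric], simp)
  also have "\<dots> = (\<Sum>l\<in>set (L s). f l)" unfolding set_L ..
  also have "\<dots> = sum_list (map f (L s))" using distinct_L by (simp add: sum.distinct_set_conv_list)
  also have "\<dots> = (\<Sum>t<ks s. f (L s ! t))" by (simp add: sum_list_sum_nth lessThan_atLeast0)
  finally show ?thesis .
qed

definition asm :: "(nat \<Rightarrow> complex mat) \<Rightarrow> complex mat" where
  "asm F = mat k k (\<lambda>(i,j). if c i = c j then F (c i) $$ (io i, io j) else 0)"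

lemma asm_carrier[simp]: "asm F \<in> carrier_mat k k" unfolding asm_def by auto
lemma asm_dims[simp]: "dim_row (asm F) = k" "dim_col (asm F) = k" unfolding asm_def by auto
lemma asm_index: "i < k \<Longrightarrow> j < k \<Longrightarrow> asm F $$ (i,j) = (if c i = c j then F (c i) $$ (io i, io j) else 0)"
  unfolding asm_def by auto

lemma asm_mult: assumes F: "\<And>s. F s \<in> carrier_mat (ks s) (ks s)" and G: "\<And>s. G s \<in> carrier_mat (ks s) (ks s)"
  shows "asm F * asm G = asm (\<lambda>s. F s * G s)"
proof (rule eq_matI)
  fix i j assume "i < dim_row (asm (\<lambda>s. F s * G s))" "j < dim_col (asm (\<lambda>s. F s * G s))"
  then have i: "i < k" and j: "j < k" by auto
  have "(asm F * asm G) $$ (i,j) = (\<Sum>l<k. asm F $$ (i,l) * asm G $$ (l,j))"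
    using i j by (simp add: scalar_prod_def lessThan_atLeast0)
  also have "\<dots> = (\<Sum>l<k. if c l = c i then (if c i = c j then F (c i) $$ (io i, io l) * G (c i) $$ (io l, io j) else 0) else 0)"
    by (rule sum.cong[OF refl], auto simp: asm_index i j)
  also have "\<dots> = (\<Sum>t<ks (c i). (if c i = c j then F (c i) $$ (io i, t) * G (c i) $$ (t, io j) else 0))"
    unfolding reindex by (rule sum.cong[OF refl]) (simp only: io_L lessThan_iff)
  also have "\<dots> = asm (\<lambda>s. F s * G s) $$ (i,j)"
  proof (cases "c i = c j")
    case True
    have "io i < ks (c i)" "io j < ks (c i)" using io_a[OF i] io_a[OF j] True by auto
    then show ?thesis using True F[of "c i"] G[of "c i"] unfolding asm_index[OF i j]
      by (simp add: scalar_prod_def lessThan_atLeast0)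
  next
    case False then show ?thesis unfolding asm_index[OF i j] by simp
  qed
  finally show "(asm F * asm G) $$ (i,j) = asm (\<lambda>s. F s * G s) $$ (i,j)" .
qed auto

lemma asm_one: "asm (\<lambda>s. 1\<^sub>m (ks s)) = 1\<^sub>m k"
proof (rule eq_matI)
  fix i j assume "i < dim_row (1\<^sub>m k :: complex mat)" "j < dim_col (1\<^sub>m k :: complex mat)"
  then have i: "i < k" and j: "j < k" by auto
  show "asm (\<lambda>s. 1\<^sub>m (ks s)) $$ (i,j) = 1\<^sub>m k $$ (i,j)"
    unfolding asm_index[OF i j] using io_a[OF i] io_a[OF j] io_inj[OF i j] i j by auto
qed auto

lemma asm_pow: assumes F: "\<And>s. F s \<in> carrier_mat (ks s) (ks s)"
  shows "asm F ^\<^sub>m t = asm (\<lambda>s. F s ^\<^sub>m t)"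
proof (induction t)
  case 0
  have "dim_row (F s) = ks s" for s using F[of s] by auto
  then show ?case using asm_one by simp
next
  case (Suc t)
  have "asm F ^\<^sub>m Suc t = asm (\<lambda>s. F s ^\<^sub>m t) * asm F" using Suc by simp
  also have "\<dots> = asm (\<lambda>s. F s ^\<^sub>m t * F s)" by (rule asm_mult, insert F, auto)
  finally show ?case by simp
qed

definition restr :: "complex mat \<Rightarrow> nat \<Rightarrow> complex mat" where
  "restr X s = mat (ks s) (ks s) (\<lambda>(t,t'). X $$ (L s ! t, L s ! t'))"

lemma restr_carrier[simp]: "restr X s \<in> carrier_mat (ks s) (ks s)" unfolding restr_def by auto
lemma restr_dims[simp]: "dim_row (restr X s) = ks s" "dim_col (restr X s) = ks s" unfolding restr_def by auto

lemma asm_restr: assumes X: "X \<in> carrier_mat k k" and gr: "\<And>i j. i < k \<Longrightarrow> j < k \<Longrightarrow> X $$ (i,j) \<noteq> 0 \<Longrightarrow> c i = c j"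
  shows "asm (restr X) = X"
proof (rule eq_matI)
  fix i j assume "i < dim_row X" "j < dim_col X"
  then have i: "i < k" and j: "j < k" using X by auto
  show "asm (restr X) $$ (i,j) = X $$ (i,j)"
    unfolding asm_index[OF i j] using io_a[OF i] io_a[OF j] gr[OF i j] by (auto simp: restr_def)
qed (insert X, auto)

lemma asm_entry_restr: "t < ks s \<Longrightarrow> t' < ks s \<Longrightarrow> asm F $$ (L s ! t, L s ! t') = F s $$ (t, t')"
  using io_b[of t s] io_b[of t' s] asm_index by auto

end

lemma J0_upper: assumes js: "jstr ms" and i: "i < sum_list ms" and j: "j < sum_list ms"
  and ne: "jstr.J0 ms $$ (i,j) \<noteq> 0" shows "i < j"
proof -
  from ne have "blk ms i = blk ms j \<and> pos ms j = Suc (pos ms i)"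
    unfolding jstr.J0_index[OF js i j] by (auto split: if_splits)
  then show ?thesis using jstr.rel_right[OF js i j] by auto
qed

lemma nilp_triang:
  fixes M :: "complex mat"
  assumes M: "M \<in> carrier_mat m m" and nil: "M ^\<^sub>m N = 0\<^sub>m m m"
  shows "\<exists>P Q. P \<in> carrier_mat m m \<and> Q \<in> carrier_mat m m \<and> P * Q = 1\<^sub>m m \<and> Q * P = 1\<^sub>m m \<and>
     (\<forall>i<m. \<forall>j<m. (Q * M * P) $$ (i,j) \<noteq> 0 \<longrightarrow> i < j)"
proof -
  from nilp_jordan[OF M nil] obtain ms P Q where js: "jstr ms" and m: "sum_list ms = m"
    and P: "P \<in> carrier_mat m m" and Q: "Q \<in> carrier_mat m m" and PQ: "P * Q = 1\<^sub>m m" and QP: "Q * P = 1\<^sub>m m"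
    and MJ: "M = P * jstr.J0 ms * Q" by blast
  have J: "jstr.J0 ms \<in> carrier_mat m m" using jstr.J0_carrier[OF js] m by simp
  have "Q * M * P = jstr.J0 ms" unfolding MJ by (rule sim_cancel[OF P Q J QP])
  with J0_upper[OF js] m P Q PQ QP show ?thesis by (intro exI[of _ P] exI[of _ Q]) auto
qed

lemma group_triang:
  fixes D :: "complex mat" and c :: "nat \<Rightarrow> nat"
  assumes D: "D \<in> carrier_mat k k" and nil: "D ^\<^sub>m N = 0\<^sub>m k k"
    and gr: "\<And>i j. i < k \<Longrightarrow> j < k \<Longrightarrow> D $$ (i,j) \<noteq> 0 \<Longrightarrow> c i = c j"
  shows "\<exists>U U'. U \<in> carrier_mat k k \<and> U' \<in> carrier_mat k k \<and> U * U' = 1\<^sub>m k \<and> U' * U = 1\<^sub>m k \<and>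
     (\<forall>i<k. \<forall>j<k. U $$ (i,j) \<noteq> 0 \<longrightarrow> c i = c j) \<and> (\<forall>i<k. \<forall>j<k. U' $$ (i,j) \<noteq> 0 \<longrightarrow> c i = c j) \<and>
     (\<forall>i<k. \<forall>j<k. (U' * D * U) $$ (i,j) \<noteq> 0 \<longrightarrow> i < j)"
proof -
  interpret colors k c .
  let ?R = "restr D"
  have DR: "asm ?R = D" by (rule asm_restr[OF D gr])
  have nilR: "?R s ^\<^sub>m N = 0\<^sub>m (ks s) (ks s)" for s
  proof (rule eq_matI)
    fix t t' assume "t < dim_row (0\<^sub>m (ks s) (ks s) :: complex mat)" "t' < dim_col (0\<^sub>m (ks s) (ks s) :: complex mat)"
    then have t: "t < ks s" "t' < ks s" by auto
    have "asm (\<lambda>s. ?R s ^\<^sub>m N) = 0\<^sub>m k k" using asm_pow[of ?R N] DR nil by simp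
    then have "asm (\<lambda>s. ?R s ^\<^sub>m N) $$ (L s ! t, L s ! t') = 0" using io_b[OF t(1)] io_b[OF t(2)] by simp
    then show "(?R s ^\<^sub>m N) $$ (t,t') = 0\<^sub>m (ks s) (ks s) $$ (t,t')"
      unfolding asm_entry_restr[OF t] using t by simp
  qed (auto)
  have "\<forall>s. \<exists>PQ. fst PQ \<in> carrier_mat (ks s) (ks s) \<and> snd PQ \<in> carrier_mat (ks s) (ks s) \<and>
      fst PQ * snd PQ = 1\<^sub>m (ks s) \<and> snd PQ * fst PQ = 1\<^sub>m (ks s) \<and>
      (\<forall>i<ks s. \<forall>j<ks s. (snd PQ * ?R s * fst PQ) $$ (i,j) \<noteq> 0 \<longrightarrow> i < j)"
  proof
    fix s
    from nilp_triang[OF restr_carrier nilR[of s]] obtain P Q where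
      "P \<in> carrier_mat (ks s) (ks s) \<and> Q \<in> carrier_mat (ks s) (ks s) \<and> P * Q = 1\<^sub>m (ks s) \<and> Q * P = 1\<^sub>m (ks s) \<and>
       (\<forall>i<ks s. \<forall>j<ks s. (Q * ?R s * P) $$ (i,j) \<noteq> 0 \<longrightarrow> i < j)" by blast
    then show "\<exists>PQ. fst PQ \<in> carrier_mat (ks s) (ks s) \<and> snd PQ \<in> carrier_mat (ks s) (ks s) \<and>
      fst PQ * snd PQ = 1\<^sub>m (ks s) \<and> snd PQ * fst PQ = 1\<^sub>m (ks s) \<and>
      (\<forall>i<ks s. \<forall>j<ks s. (snd PQ * ?R s * fst PQ) $$ (i,j) \<noteq> 0 \<longrightarrow> i < j)"
      by (intro exI[of _ "(P,Q)"]) simp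
  qed
  from choice[OF this] obtain PQ where PQ: "\<forall>s. fst (PQ s) \<in> carrier_mat (ks s) (ks s) \<and> snd (PQ s) \<in> carrier_mat (ks s) (ks s) \<and>
      fst (PQ s) * snd (PQ s) = 1\<^sub>m (ks s) \<and> snd (PQ s) * fst (PQ s) = 1\<^sub>m (ks s) \<and>
      (\<forall>i<ks s. \<forall>j<ks s. (snd (PQ s) * ?R s * fst (PQ s)) $$ (i,j) \<noteq> 0 \<longrightarrow> i < j)" by blast
  define P where "P s = fst (PQ s)" for s
  define Q where "Q s = snd (PQ s)" for s
  have P: "P s \<in> carrier_mat (ks s) (ks s)" and Q: "Q s \<in> carrier_mat (ks s) (ks s)"
    and PQ1: "P s * Q s = 1\<^sub>m (ks s)" and QP1: "Q s * P s = 1\<^sub>m (ks s)"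
    and tri: "\<And>i j. i < ks s \<Longrightarrow> j < ks s \<Longrightarrow> (Q s * ?R s * P s) $$ (i,j) \<noteq> 0 \<Longrightarrow> i < j" for s
    using spec[OF PQ, of s] unfolding P_def Q_def by auto
  define U where "U = asm P"
  define U' where "U' = asm Q"
  have UU: "U * U' = 1\<^sub>m k" unfolding U_def U'_def asm_mult[OF P Q] PQ1 asm_one ..
  have UU': "U' * U = 1\<^sub>m k" unfolding U_def U'_def asm_mult[OF Q P] QP1 asm_one ..
  have QR: "Q s * ?R s \<in> carrier_mat (ks s) (ks s)" for s using Q[of s] by auto
  have "U' * D * U = asm Q * asm ?R * asm P" unfolding U_def U'_def using DR by simp
  also have "\<dots> = asm (\<lambda>s. Q s * ?R s) * asm P" by (simp add: asm_mult[OF Q restr_carrier])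
  also have "\<dots> = asm (\<lambda>s. Q s * ?R s * P s)" by (rule asm_mult[OF QR P])
  finally have T: "U' * D * U = asm (\<lambda>s. Q s * ?R s * P s)" .
  have tr: "i < j" if i: "i < k" and j: "j < k" and ne: "(U' * D * U) $$ (i,j) \<noteq> 0" for i j
  proof -
    from ne have cij: "c i = c j" and ne2: "(Q (c i) * ?R (c i) * P (c i)) $$ (io i, io j) \<noteq> 0"
      unfolding T asm_index[OF i j] by (auto split: if_splits)
    from io_a[OF i] io_a[OF j] cij have "io i < ks (c i)" "io j < ks (c i)" by auto
    from tri[OF this ne2] have lt: "io i < io j" .
    show "i < j"
    proof (rule ccontr)
      assume "\<not> i < j"
      then have "j < i \<or> j = i" by auto
      then show False using io_mono[of j i] cij i lt by auto
    qed
  qed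
  have g1: "c i = c j" if i: "i < k" and j: "j < k" and ne: "U $$ (i,j) \<noteq> 0" for i j
    using ne unfolding U_def asm_index[OF i j] by (auto split: if_splits)
  have g2: "c i = c j" if i: "i < k" and j: "j < k" and ne: "U' $$ (i,j) \<noteq> 0" for i j
    using ne unfolding U'_def asm_index[OF i j] by (auto split: if_splits)
  have c1: "U \<in> carrier_mat k k" "U' \<in> carrier_mat k k" unfolding U_def U'_def by auto
  show ?thesis using tr g1 g2 c1 UU UU' by blast
qed

context jstr
begin

lemma commJ_mult: assumes X: "commJ X" and Y: "commJ Y" shows "commJ (X * Y)"
proof -
  have Xc: "X \<in> carrier_mat nn nn" and Yc: "Y \<in> carrier_mat nn nn" and ex: "X * J0 = J0 * X" and ey: "Y * J0 = J0 * Y"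
    using X Y unfolding commJ_def by auto
  have "X * Y * J0 = X * (Y * J0)" using Xc Yc by (simp add: assoc_mult_mat[OF Xc Yc J0_carrier])
  also have "\<dots> = X * (J0 * Y)" using ey by simp
  also have "\<dots> = (X * J0) * Y" using assoc_mult_mat[OF Xc J0_carrier Yc] by simp
  also have "\<dots> = J0 * X * Y" using ex by simp
  also have "\<dots> = J0 * (X * Y)" using assoc_mult_mat[OF J0_carrier Xc Yc] by simp
  finally show ?thesis unfolding commJ_def using Xc Yc by auto
qed

lemma commJ_one: "commJ (1\<^sub>m nn)" unfolding commJ_def by simp

lemma commJ_carrier: "commJ X \<Longrightarrow> X \<in> carrier_mat nn nn" unfolding commJ_def by auto

lemma commJ_pow: assumes X: "commJ X" shows "commJ (X ^\<^sub>m t)"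
proof (induction t)
  case 0
  have "dim_row X = nn" using commJ_carrier[OF X] by auto
  then show ?case using commJ_one by simp
next
  case (Suc t) then show ?case using commJ_mult[OF Suc X] by simp
qed

lemma st_facts: assumes b: "b < kk" shows "st ms b < nn" "bk (st ms b) = b" "ps (st ms b) = 0"
  using ixb[OF b sz_pos[OF b]] by auto

definition Dm :: "complex mat \<Rightarrow> complex mat" where
  "Dm X = mat kk kk (\<lambda>(b',b). if sz b' = sz b then X $$ (ix b' 0, ix b 0) else 0)"

lemma Dm_carrier[simp]: "Dm X \<in> carrier_mat kk kk" unfolding Dm_def by auto
lemma Dm_dims[simp]: "dim_row (Dm X) = kk" "dim_col (Dm X) = kk" unfolding Dm_def by auto
lemma Dm_index: "b' < kk \<Longrightarrow> b < kk \<Longrightarrow> Dm X $$ (b',b) = (if sz b' = sz b then X $$ (ix b' 0, ix b 0) else 0)"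
  unfolding Dm_def by auto

lemma prod_blocks: assumes X: "X \<in> carrier_mat nn nn" and Y: "Y \<in> carrier_mat nn nn" and i: "i < nn" and j: "j < nn"
  shows "(X * Y) $$ (i,j) = (\<Sum>c<kk. \<Sum>q<sz c. X $$ (i, ix c q) * Y $$ (ix c q, j))"
proof -
  have "(X * Y) $$ (i,j) = (\<Sum>l<nn. X $$ (i,l) * Y $$ (l,j))"
    using X Y i j by (simp add: scalar_prod_def lessThan_atLeast0)
  also have "\<dots> = (\<Sum>c<kk. \<Sum>q<sz c. X $$ (i, ix c q) * Y $$ (ix c q, j))" by (rule sum_blocks)
  finally show ?thesis .
qed

lemma Dm_mult: assumes X: "commJ X" and Y: "commJ Y" shows "Dm (X * Y) = Dm X * Dm Y"
proof (rule eq_matI)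
  fix b' b assume "b' < dim_row (Dm X * Dm Y)" "b < dim_col (Dm X * Dm Y)"
  then have b': "b' < kk" and b: "b < kk" by auto
  have Xc: "X \<in> carrier_mat nn nn" and Yc: "Y \<in> carrier_mat nn nn" using X Y commJ_carrier by auto
  have s0: "0 < sz b" "0 < sz b'" using sz_pos b b' by auto
  have RHS: "(Dm X * Dm Y) $$ (b',b) = (\<Sum>c<kk. Dm X $$ (b',c) * Dm Y $$ (c,b))"
    using b b' by (simp add: scalar_prod_def lessThan_atLeast0)
  show "Dm (X * Y) $$ (b', b) = (Dm X * Dm Y) $$ (b', b)"
  proof (cases "sz b' = sz b")
    case False
    have "Dm X $$ (b',c) * Dm Y $$ (c,b) = 0" if c: "c < kk" for c
      using False c b b' by (simp add: Dm_index)
    then show ?thesis unfolding RHS using False b b' by (simp add: Dm_index)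
  next
    case True
    have i: "ix b' 0 < nn" and j: "ix b 0 < nn" using st_facts b b' by auto
    have tm: "X $$ (ix b' 0, ix c q) * Y $$ (ix c q, ix b 0) =
        (if q = 0 then Dm X $$ (b',c) * Dm Y $$ (c,b) else 0)" if c: "c < kk" and q: "q < sz c" for c q
    proof (cases "X $$ (ix b' 0, ix c q) * Y $$ (ix c q, ix b 0) = 0")
      case False
      then have nx: "X $$ (ix b' 0, ix c q) \<noteq> 0" and ny: "Y $$ (ix c q, ix b 0) \<noteq> 0" by auto
      from supp1[OF Y b s0(1) c q ny] have q0: "q = 0" by simp
      from supp2[OF Y b s0(1) c q ny] supp2[OF X c q b' s0(2) nx] q0 True
      have "sz c = sz b" by auto
      then show ?thesis using q0 True c b b' by (simp add: Dm_index)
    next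
      case Tr: True
      show ?thesis
      proof (cases "q = 0 \<and> sz c = sz b")
        case True2: True
        then show ?thesis using Tr True c b b' by (simp add: Dm_index)
      next
        case False2: False
        then show ?thesis using Tr True c b b' by (auto simp: Dm_index)
      qed
    qed
    have "Dm (X * Y) $$ (b', b) = (X * Y) $$ (ix b' 0, ix b 0)" using True b b' by (simp add: Dm_index)
    also have "\<dots> = (\<Sum>c<kk. \<Sum>q<sz c. X $$ (ix b' 0, ix c q) * Y $$ (ix c q, ix b 0))"
      by (rule prod_blocks[OF Xc Yc i j])
    also have "\<dots> = (\<Sum>c<kk. \<Sum>q<sz c. if q = 0 then Dm X $$ (b',c) * Dm Y $$ (c,b) else 0)"
      by (rule sum.cong[OF refl], rule sum.cong[OF refl], rule tm, auto)
    also have "\<dots> = (\<Sum>c<kk. Dm X $$ (b',c) * Dm Y $$ (c,b))"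
    proof (rule sum.cong[OF refl])
      fix c assume "c \<in> {..<kk}"
      then have "0 < sz c" using sz_pos by auto
      then show "(\<Sum>q<sz c. if q = 0 then Dm X $$ (b',c) * Dm Y $$ (c,b) else 0) = Dm X $$ (b',c) * Dm Y $$ (c,b)"
        by simp
    qed
    finally show ?thesis unfolding RHS .
  qed
qed auto

lemma Dm_one: "Dm (1\<^sub>m nn) = 1\<^sub>m kk"
proof (rule eq_matI)
  fix b' b assume "b' < dim_row (1\<^sub>m kk :: complex mat)" "b < dim_col (1\<^sub>m kk :: complex mat)"
  then have b': "b' < kk" and b: "b < kk" by auto
  have s0: "0 < sz b" "0 < sz b'" using sz_pos b b' by auto
  have i: "ix b' 0 < nn" and j: "ix b 0 < nn" using st_facts b b' by auto
  show "Dm (1\<^sub>m nn) $$ (b', b) = 1\<^sub>m kk $$ (b', b)"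
    unfolding Dm_index[OF b' b] using i j b b' ix_inj[OF b' s0(2) b s0(1)] by auto
qed auto

lemma Dm_zero: "Dm (0\<^sub>m nn nn) = 0\<^sub>m kk kk"
proof (rule eq_matI)
  fix b' b assume "b' < dim_row (0\<^sub>m kk kk :: complex mat)" "b < dim_col (0\<^sub>m kk kk :: complex mat)"
  then have b': "b' < kk" and b: "b < kk" by auto
  have s0: "0 < sz b" "0 < sz b'" using sz_pos b b' by auto
  have i: "ix b' 0 < nn" and j: "ix b 0 < nn" using st_facts b b' by auto
  show "Dm (0\<^sub>m nn nn) $$ (b', b) = 0\<^sub>m kk kk $$ (b', b)" unfolding Dm_index[OF b' b] using i j b b' by auto
qed auto

lemma Dm_pow: assumes X: "commJ X" shows "Dm (X ^\<^sub>m t) = Dm X ^\<^sub>m t"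
proof (induction t)
  case 0
  have "dim_row X = nn" using commJ_carrier[OF X] by auto
  then show ?case using Dm_one by simp
next
  case (Suc t) then show ?case using Dm_mult[OF commJ_pow[OF X] X] by simp
qed

definition grp :: "complex mat \<Rightarrow> bool" where
  "grp U \<longleftrightarrow> U \<in> carrier_mat kk kk \<and> (\<forall>i<kk. \<forall>j<kk. U $$ (i,j) \<noteq> 0 \<longrightarrow> sz i = sz j)"

definition Qm :: "complex mat \<Rightarrow> complex mat" where
  "Qm U = mat nn nn (\<lambda>(x,y). if ps x = ps y then U $$ (bk x, bk y) else 0)"

lemma Qm_carrier[simp]: "Qm U \<in> carrier_mat nn nn" unfolding Qm_def by auto
lemma Qm_dims[simp]: "dim_row (Qm U) = nn" "dim_col (Qm U) = nn" unfolding Qm_def by auto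
lemma Qm_index: "x < nn \<Longrightarrow> y < nn \<Longrightarrow> Qm U $$ (x,y) = (if ps x = ps y then U $$ (bk x, bk y) else 0)"
  unfolding Qm_def by auto

lemma Qm_index_r: "c < kk \<Longrightarrow> q < sz c \<Longrightarrow> x < nn \<Longrightarrow> Qm U $$ (x, ix c q) = (if ps x = q then U $$ (bk x, c) else 0)"
  using ixb[of c q] Qm_index[of x "ix c q" U] by simp
lemma Qm_index_l: "c < kk \<Longrightarrow> q < sz c \<Longrightarrow> y < nn \<Longrightarrow> Qm U $$ (ix c q, y) = (if q = ps y then U $$ (c, bk y) else 0)"
  using ixb[of c q] Qm_index[of "ix c q" y U] by auto

lemma eq_iff_bp: "x < nn \<Longrightarrow> y < nn \<Longrightarrow> (x = y) = (bk x = bk y \<and> ps x = ps y)"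
proof
  assume x: "x < nn" and y: "y < nn" and e: "bk x = bk y \<and> ps x = ps y"
  have "x = ix (bk x) (ps x)" using bp[OF x] by simp
  also have "\<dots> = ix (bk y) (ps y)" using e by simp
  also have "\<dots> = y" using bp[OF y] by simp
  finally show "x = y" .
qed simp

lemma Qm_mult: assumes U: "grp U" and V: "V \<in> carrier_mat kk kk" shows "Qm U * Qm V = Qm (U * V)"
proof (rule eq_matI)
  fix x y assume "x < dim_row (Qm (U * V))" "y < dim_col (Qm (U * V))"
  then have x: "x < nn" and y: "y < nn" by auto
  from bp[OF x] have bx: "bk x < kk" "ps x < sz (bk x)" by auto
  from bp[OF y] have by': "bk y < kk" by auto
  have Uc: "U \<in> carrier_mat kk kk" and Ug: "\<And>i j. i < kk \<Longrightarrow> j < kk \<Longrightarrow> U $$ (i,j) \<noteq> 0 \<Longrightarrow> sz i = sz j"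
    using U unfolding grp_def by auto
  have "(Qm U * Qm V) $$ (x,y) = (\<Sum>c<kk. \<Sum>q<sz c. Qm U $$ (x, ix c q) * Qm V $$ (ix c q, y))"
    by (rule prod_blocks[OF Qm_carrier Qm_carrier x y])
  also have "\<dots> = (\<Sum>c<kk. \<Sum>q<sz c. if q = ps x then (if ps x = ps y then U $$ (bk x, c) * V $$ (c, bk y) else 0) else 0)"
    by (rule sum.cong[OF refl], rule sum.cong[OF refl], simp add: Qm_index_r Qm_index_l x y)
  also have "\<dots> = (\<Sum>c<kk. if ps x = ps y then U $$ (bk x, c) * V $$ (c, bk y) else 0)"
  proof (rule sum.cong[OF refl])
    fix c assume c: "c \<in> {..<kk}"
    show "(\<Sum>q<sz c. if q = ps x then (if ps x = ps y then U $$ (bk x, c) * V $$ (c, bk y) else 0) else 0) =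
        (if ps x = ps y then U $$ (bk x, c) * V $$ (c, bk y) else 0)"
    proof (cases "ps x < sz c")
      case True then show ?thesis by simp
    next
      case False
      then have "U $$ (bk x, c) = 0" using Ug[of "bk x" c] bx c by auto
      then show ?thesis by simp
    qed
  qed
  also have "\<dots> = Qm (U * V) $$ (x,y)"
    using x y bx by' Uc V by (simp add: Qm_index scalar_prod_def lessThan_atLeast0)
  finally show "(Qm U * Qm V) $$ (x,y) = Qm (U * V) $$ (x,y)" .
qed auto

lemma Qm_one: "Qm (1\<^sub>m kk) = 1\<^sub>m nn"
proof (rule eq_matI)
  fix x y assume "x < dim_row (1\<^sub>m nn :: complex mat)" "y < dim_col (1\<^sub>m nn :: complex mat)"
  then have x: "x < nn" and y: "y < nn" by auto
  from bp[OF x] bp[OF y] show "Qm (1\<^sub>m kk) $$ (x,y) = 1\<^sub>m nn $$ (x,y)"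
    unfolding Qm_index[OF x y] using x y eq_iff_bp[OF x y] by auto
qed auto

lemma pred_ix: assumes y: "y < nn" and p: "0 < ps y" shows "y - 1 < nn \<and> bk (y - 1) = bk y \<and> ps (y - 1) = ps y - 1"
proof -
  from bp[OF y] have b: "bk y < kk" "ps y - 1 < sz (bk y)" and e: "ix (bk y) (ps y) = y" by auto
  have e2: "ix (bk y) (ps y - 1) = y - 1" using e p by linarith
  from ixb[OF b] show ?thesis unfolding e2 by auto
qed

lemma succ_ix: assumes x: "x < nn" and p: "Suc (ps x) < sz (bk x)" shows "Suc x < nn \<and> bk (Suc x) = bk x \<and> ps (Suc x) = Suc (ps x)"
proof -
  from bp[OF x] have b: "bk x < kk" and e: "ix (bk x) (ps x) = x" by auto
  have e2: "ix (bk x) (Suc (ps x)) = Suc x" using e by linarith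
  from ixb[OF b p] show ?thesis unfolding e2 by auto
qed

lemma Qm_commJ: assumes U: "grp U" shows "commJ (Qm U)"
proof -
  have Ug: "\<And>i j. i < kk \<Longrightarrow> j < kk \<Longrightarrow> U $$ (i,j) \<noteq> 0 \<Longrightarrow> sz i = sz j"
    using U unfolding grp_def by auto
  have "Qm U * J0 = J0 * Qm U"
  proof (rule eq_matI)
    fix x y assume "x < dim_row (J0 * Qm U)" "y < dim_col (J0 * Qm U)"
    then have x: "x < nn" and y: "y < nn" by auto
    from bp[OF x] have bx: "bk x < kk" by auto
    from bp[OF y] have by': "bk y < kk" "ps y < sz (bk y)" by auto
    have L: "(Qm U * J0) $$ (x,y) = (if 0 < ps y \<and> ps x = ps y - 1 then U $$ (bk x, bk y) else 0)"
    proof (cases "0 < ps y")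
      case True
      from pred_ix[OF y True] have "y - 1 < nn" "bk (y - 1) = bk y" "ps (y - 1) = ps y - 1" by auto
      then show ?thesis using True unfolding mult_J0_right[OF Qm_carrier x y] Qm_index[OF x \<open>y - 1 < nn\<close>] by simp
    qed (simp add: mult_J0_right[OF Qm_carrier x y])
    have R: "(J0 * Qm U) $$ (x,y) = (if Suc (ps x) < sz (bk x) \<and> Suc (ps x) = ps y then U $$ (bk x, bk y) else 0)"
    proof (cases "Suc (ps x) < sz (bk x)")
      case True
      from succ_ix[OF x True] have "Suc x < nn" "bk (Suc x) = bk x" "ps (Suc x) = Suc (ps x)" by auto
      then show ?thesis using True unfolding mult_J0_left[OF Qm_carrier x y] Qm_index[OF \<open>Suc x < nn\<close> y] by simp
    qed (simp add: mult_J0_left[OF Qm_carrier x y])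
    show "(Qm U * J0) $$ (x,y) = (J0 * Qm U) $$ (x,y)"
    proof (cases "U $$ (bk x, bk y) = 0")
      case True then show ?thesis unfolding L R by simp
    next
      case False
      with Ug[OF bx by'(1)] have "sz (bk x) = sz (bk y)" by simp
      then show ?thesis unfolding L R using by'(2) by auto
    qed
  qed auto
  then show ?thesis unfolding commJ_def by simp
qed

lemma Dm_Qm: assumes U: "grp U" shows "Dm (Qm U) = U"
proof (rule eq_matI)
  fix b' b assume "b' < dim_row U" "b < dim_col U"
  then have b': "b' < kk" and b: "b < kk" using U unfolding grp_def by auto
  have s0: "0 < sz b" "0 < sz b'" using sz_pos b b' by auto
  have i: "ix b' 0 < nn" and j: "ix b 0 < nn" using st_facts b b' by auto
  show "Dm (Qm U) $$ (b',b) = U $$ (b',b)"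
    unfolding Dm_index[OF b' b] Qm_index[OF i j] using ixb[OF b' s0(2)] ixb[OF b s0(1)] U b b'
    unfolding grp_def by auto
qed (insert U, auto simp: grp_def)

end

lemma rank_nilp:
  fixes M :: "'a :: comm_ring_1 mat"
  assumes M: "M \<in> carrier_mat m m" and dec: "\<And>i j. i < m \<Longrightarrow> j < m \<Longrightarrow> M $$ (i,j) \<noteq> 0 \<Longrightarrow> f i < f j"
    and bnd: "\<And>i. i < m \<Longrightarrow> f i < R"
  shows "M ^\<^sub>m R = 0\<^sub>m m m"
proof -
  have claim: "\<forall>i<m. \<forall>j<m. (M ^\<^sub>m t) $$ (i,j) \<noteq> 0 \<longrightarrow> f i + t \<le> f j" for t
  proof (induction t)
    case 0 then show ?case using M by auto
  next
    case (Suc t)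
    show ?case
    proof (intro allI impI)
      fix i j assume i: "i < m" and j: "j < m" and ne: "(M ^\<^sub>m Suc t) $$ (i,j) \<noteq> 0"
      have Mt: "M ^\<^sub>m t \<in> carrier_mat m m" using M by simp
      have "(M ^\<^sub>m Suc t) $$ (i,j) = (\<Sum>l\<in>{0..<m}. (M ^\<^sub>m t) $$ (i,l) * M $$ (l,j))"
        using M Mt i j by (simp add: scalar_prod_def)
      with ne obtain l where l: "l \<in> {0..<m}" and nl: "(M ^\<^sub>m t) $$ (i,l) * M $$ (l,j) \<noteq> 0"
        by (metis (no_types, lifting) sum.neutral)
      from nl have a: "(M ^\<^sub>m t) $$ (i,l) \<noteq> 0" and b: "M $$ (l,j) \<noteq> 0" by auto
      from Suc.IH i l a have "f i + t \<le> f l" by auto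
      moreover from dec[OF _ j b] l have "f l < f j" by auto
      ultimately show "f i + Suc t \<le> f j" by auto
    qed
  qed
  show ?thesis
  proof (rule eq_matI)
    fix i j assume "i < dim_row (0\<^sub>m m m :: 'a mat)" "j < dim_col (0\<^sub>m m m :: 'a mat)"
    then have i: "i < m" and j: "j < m" by auto
    show "(M ^\<^sub>m R) $$ (i,j) = 0\<^sub>m m m $$ (i,j)"
    proof (rule ccontr)
      assume "(M ^\<^sub>m R) $$ (i,j) \<noteq> 0\<^sub>m m m $$ (i,j)"
      with i j have "(M ^\<^sub>m R) $$ (i,j) \<noteq> 0" by simp
      with claim i j have "f i + R \<le> f j" by blast
      with bnd[OF j] show False by auto
    qed
  qed (insert M, auto)
qed

lemma subspace_full:
  assumes W: "is_subspace n W" and units: "\<And>i. i < n \<Longrightarrow> unit_vec n i \<in> W"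
  shows "W = carrier_vec n"
proof
  show "W \<subseteq> carrier_vec n" using W unfolding is_subspace_def by auto
next
  show "carrier_vec n \<subseteq> W"
  proof
    fix v :: "complex vec" assume v: "v \<in> carrier_vec n"
    have "vec n (\<lambda>i. if i < m then v $ i else 0) \<in> W" if "m \<le> n" for m
      using that
    proof (induction m)
      case 0
      have "vec n (\<lambda>i. if i < 0 then v $ i else 0) = 0\<^sub>v n" by auto
      then show ?case using W unfolding is_subspace_def by auto
    next
      case (Suc m)
      have e: "vec n (\<lambda>i. if i < Suc m then v $ i else 0) =
          vec n (\<lambda>i. if i < m then v $ i else 0) + (v $ m) \<cdot>\<^sub>v unit_vec n m"
        by (rule eq_vecI, auto simp: unit_vec_def less_Suc_eq)
      have "vec n (\<lambda>i. if i < m then v $ i else 0) \<in> W" using Suc by auto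
      moreover have "(v $ m) \<cdot>\<^sub>v unit_vec n m \<in> W" using W units[of m] Suc.prems unfolding is_subspace_def by auto
      ultimately show ?case unfolding e using W unfolding is_subspace_def by blast
    qed
    from this[of n] have "vec n (\<lambda>i. if i < n then v $ i else 0) \<in> W" by simp
    moreover have "vec n (\<lambda>i. if i < n then v $ i else 0) = v" using v by (intro eq_vecI, auto)
    ultimately show "v \<in> W" by simp
  qed
qed

lemma mult_unit: fixes A :: "'a :: comm_ring_1 mat" assumes A: "A \<in> carrier_mat n n" and j: "j < n"
  shows "A *\<^sub>v unit_vec n j = vec n (\<lambda>i. A $$ (i,j))"
proof (rule eq_vecI)
  fix i assume "i < dim_vec (vec n (\<lambda>i. A $$ (i,j)))"
  then have i: "i < n" by simp
  have r: "row A i \<in> carrier_vec n" using A by auto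
  show "(A *\<^sub>v unit_vec n j) $ i = vec n (\<lambda>i. A $$ (i,j)) $ i"
    using A i j scalar_prod_right_unit[OF j, of "row A i"] by simp
qed (insert A, auto)

definition mu3 :: "nat \<Rightarrow> nat \<Rightarrow> nat \<Rightarrow> nat \<Rightarrow> nat \<Rightarrow> nat" where
  "mu3 K k p s b = p * (K * k) + (K - s) * k + b"

lemma mu3_bound: fixes s b k K :: nat assumes "1 \<le> s" "b < k" "1 \<le> K" shows "(K - s) * k + b < K * k"
proof -
  have "K - s \<le> K - 1" using assms(1) by (rule diff_le_mono2)
  then have "(K - s) * k \<le> (K - 1) * k" by (rule mult_le_mono1)
  moreover have "(K - 1) * k + k = K * k" using assms by (cases K) auto
  ultimately show ?thesis using assms by linarith
qed

lemma mu3_less: assumes s: "1 \<le> s" "1 \<le> s'" "s \<le> K" "s' \<le> K" and b: "b < k" "b' < k"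
  and ord: "p < p' \<or> (p = p' \<and> s' < s) \<or> (p = p' \<and> s = s' \<and> b < b')"
  shows "mu3 K k p s b < mu3 K k p' s' b'"
proof -
  have K: "1 \<le> K" using s by auto
  consider (a) "p < p'" | (b) "p = p' \<and> s' < s" | (c) "p = p' \<and> s = s' \<and> b < b'" using ord by auto
  then show ?thesis
  proof cases
    case a
    have "mu3 K k p s b < p * (K * k) + K * k" unfolding mu3_def using mu3_bound[OF s(1) b(1) K] by linarith
    also have "\<dots> = Suc p * (K * k)" by simp
    also have "\<dots> \<le> p' * (K * k)" using a mult_le_mono1[of "Suc p" p' "K * k"] by auto
    also have "\<dots> \<le> mu3 K k p' s' b'" unfolding mu3_def by simp
    finally show ?thesis .
  next
    case b
    then have "Suc (K - s) \<le> K - s'" using s by auto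
    then have "Suc (K - s) * k \<le> (K - s') * k" by (rule mult_le_mono1)
    then have "(K - s) * k + b < (K - s') * k + b'" using \<open>b < k\<close> by simp
    then show ?thesis unfolding mu3_def using b by simp
  next
    case c then show ?thesis unfolding mu3_def by simp
  qed
qed

context jstr
begin

definition kap :: "nat \<Rightarrow> nat" where "kap b = sz b * kk + b"
definition rk :: "nat \<Rightarrow> nat" where "rk b = card {b' \<in> {..<kk}. kap b' < kap b}"
definition dd :: "nat \<Rightarrow> nat" where "dd x = sz (bk x) - ps x"
definition C1 :: "complex mat" where
  "C1 = mat nn nn (\<lambda>(x,y). if Suc (rk (bk x)) = rk (bk y) \<and> dd x = dd y then 1 else 0)"
definition mu :: "nat \<Rightarrow> nat" where "mu x = mu3 (Suc nn) kk (ps x) (sz (bk x)) (bk x)"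

lemma C1_carrier[simp]: "C1 \<in> carrier_mat nn nn" unfolding C1_def by auto
lemma C1_dims[simp]: "dim_row C1 = nn" "dim_col C1 = nn" unfolding C1_def by auto
lemma C1_index: "x < nn \<Longrightarrow> y < nn \<Longrightarrow> C1 $$ (x,y) = (if Suc (rk (bk x)) = rk (bk y) \<and> dd x = dd y then 1 else 0)"
  unfolding C1_def by auto

lemma sz_le: "b < kk \<Longrightarrow> sz b \<le> nn"
  by (simp add: member_le_sum_list)

lemma kap_less: assumes b: "b < kk" "b' < kk" and l: "kap b' < kap b"
  shows "sz b' \<le> sz b \<and> (sz b' = sz b \<longrightarrow> b' < b)"
proof (intro conjI impI)
  show "sz b' \<le> sz b"
  proof (rule ccontr)
    assume "\<not> sz b' \<le> sz b"
    then have "Suc (sz b) \<le> sz b'" by auto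
    then have "Suc (sz b) * kk \<le> sz b' * kk" by (rule mult_le_mono1)
    then have "sz b * kk + kk \<le> sz b' * kk" by simp
    moreover have "sz b' * kk + b' < sz b * kk + b" using l unfolding kap_def .
    ultimately show False using b by linarith
  qed
next
  assume "sz b' = sz b" then show "b' < b" using l unfolding kap_def by simp
qed

lemma kap_inj: assumes b: "b < kk" "b' < kk" and e: "kap b = kap b'" shows "b = b'"
proof -
  have "sz b' \<le> sz b \<and> sz b \<le> sz b'"
  proof (intro conjI)
    show "sz b' \<le> sz b"
    proof (rule ccontr)
      assume "\<not> sz b' \<le> sz b"
      then have "Suc (sz b) \<le> sz b'" by auto
      then have "Suc (sz b) * kk \<le> sz b' * kk" by (rule mult_le_mono1)
      then have "sz b * kk + kk \<le> sz b' * kk" by simp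
      moreover have "sz b' * kk + b' = sz b * kk + b" using e unfolding kap_def by simp
      ultimately show False using b by linarith
    qed
    show "sz b \<le> sz b'"
    proof (rule ccontr)
      assume "\<not> sz b \<le> sz b'"
      then have "Suc (sz b') \<le> sz b" by auto
      then have "Suc (sz b') * kk \<le> sz b * kk" by (rule mult_le_mono1)
      then have "sz b' * kk + kk \<le> sz b * kk" by simp
      moreover have "sz b' * kk + b' = sz b * kk + b" using e unfolding kap_def by simp
      ultimately show False using b by linarith
    qed
  qed
  then have "sz b = sz b'" by simp
  then show ?thesis using e unfolding kap_def by simp
qed

lemma rk_lt: assumes b: "b < kk" shows "rk b < kk"
proof -
  have "{b' \<in> {..<kk}. kap b' < kap b} \<subseteq> {..<kk} - {b}" by auto
  then have "rk b \<le> card ({..<kk} - {b})" unfolding rk_def by (intro card_mono) auto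
  also have "\<dots> = kk - 1" using b by simp
  finally show ?thesis using b by auto
qed

lemma rk_mono: assumes b: "b < kk" "b' < kk" and l: "kap b < kap b'" shows "rk b < rk b'"
proof -
  have "{c \<in> {..<kk}. kap c < kap b} \<subset> {c \<in> {..<kk}. kap c < kap b'}" using l b by auto
  then show ?thesis unfolding rk_def by (intro psubset_card_mono) auto
qed

lemma rk_inj: assumes b: "b < kk" "b' < kk" and e: "rk b = rk b'" shows "b = b'"
proof (rule ccontr)
  assume "b \<noteq> b'"
  then have "kap b \<noteq> kap b'" using kap_inj b by blast
  then have "kap b < kap b' \<or> kap b' < kap b" by auto
  then show False using rk_mono[OF b] rk_mono[OF b(2) b(1)] e by auto
qed

lemma rk_surj: assumes t: "t < kk" shows "\<exists>b<kk. rk b = t"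
proof -
  have sub: "rk ` {..<kk} \<subseteq> {..<kk}" using rk_lt by auto
  have inj: "inj_on rk {..<kk}" using rk_inj by (auto simp: inj_on_def)
  have "card (rk ` {..<kk}) = kk" using card_image[OF inj] by simp
  then have "rk ` {..<kk} = {..<kk}" using card_subset_eq[OF _ sub] by simp
  with t show ?thesis by (metis imageE lessThan_iff)
qed

lemma rk_succ: assumes b: "b < kk" "b' < kk" and e: "Suc (rk b') = rk b" shows "kap b' < kap b"
proof (rule ccontr)
  assume "\<not> kap b' < kap b"
  then have "kap b < kap b' \<or> kap b = kap b'" by auto
  then show False
  proof
    assume "kap b < kap b'" then show False using rk_mono[OF b] e by auto
  next
    assume "kap b = kap b'" then have "b = b'" using kap_inj b by auto
    then show False using e by auto
  qed
qed

lemma C1_comm: "commJ C1"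
proof -
  have "C1 * J0 = J0 * C1"
  proof (rule eq_matI)
    fix x y assume "x < dim_row (J0 * C1)" "y < dim_col (J0 * C1)"
    then have x: "x < nn" and y: "y < nn" by auto
    from bp[OF x] have bx: "bk x < kk" "ps x < sz (bk x)" by auto
    from bp[OF y] have by': "bk y < kk" "ps y < sz (bk y)" by auto
    have L: "(C1 * J0) $$ (x,y) = (if 0 < ps y \<and> Suc (rk (bk x)) = rk (bk y) \<and> dd x = Suc (dd y) then 1 else 0)"
    proof (cases "0 < ps y")
      case True
      from pred_ix[OF y True] have p: "y - 1 < nn" "bk (y - 1) = bk y" "ps (y - 1) = ps y - 1" by auto
      have "dd (y - 1) = Suc (dd y)" unfolding dd_def p using True by' by auto
      then show ?thesis using True p unfolding mult_J0_right[OF C1_carrier x y] C1_index[OF x p(1)] by simp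
    qed (simp add: mult_J0_right[OF C1_carrier x y])
    have R: "(J0 * C1) $$ (x,y) = (if Suc (ps x) < sz (bk x) \<and> Suc (rk (bk x)) = rk (bk y) \<and> dd x - 1 = dd y then 1 else 0)"
    proof (cases "Suc (ps x) < sz (bk x)")
      case True
      from succ_ix[OF x True] have p: "Suc x < nn" "bk (Suc x) = bk x" "ps (Suc x) = Suc (ps x)" by auto
      have "dd (Suc x) = dd x - 1" unfolding dd_def p by auto
      then show ?thesis using True p unfolding mult_J0_left[OF C1_carrier x y] C1_index[OF p(1) y] by simp
    qed (simp add: mult_J0_left[OF C1_carrier x y])
    show "(C1 * J0) $$ (x,y) = (J0 * C1) $$ (x,y)"
    proof (cases "Suc (rk (bk x)) = rk (bk y)")
      case True
      from kap_less[OF by'(1) bx(1) rk_succ[OF by'(1) bx(1) True]] have le: "sz (bk x) \<le> sz (bk y)" by simp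
      have "(0 < ps y \<and> dd x = Suc (dd y)) = (Suc (ps x) < sz (bk x) \<and> dd x - 1 = dd y)"
        unfolding dd_def using le bx by' by linarith
      then show ?thesis unfolding L R using True by simp
    next
      case False then show ?thesis unfolding L R by simp
    qed
  qed auto
  then show ?thesis unfolding commJ_def by simp
qed

lemma mu_less: assumes x: "x < nn" and y: "y < nn"
  and ord: "ps x < ps y \<or> (ps x = ps y \<and> sz (bk y) < sz (bk x)) \<or> (ps x = ps y \<and> sz (bk x) = sz (bk y) \<and> bk x < bk y)"
  shows "mu x < mu y"
proof -
  from bp[OF x] have bx: "bk x < kk" by auto
  from bp[OF y] have by': "bk y < kk" by auto
  show ?thesis unfolding mu_def
    by (rule mu3_less, insert sz_pos[OF bx] sz_pos[OF by'] sz_le[OF bx] sz_le[OF by'] bx by' ord, auto)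
qed

lemma mu_bound: assumes x: "x < nn" shows "mu x < nn * (Suc nn * kk)"
proof -
  from bp[OF x] have bx: "bk x < kk" and px: "ps x < sz (bk x)" by auto
  have "mu x < ps x * (Suc nn * kk) + Suc nn * kk"
    unfolding mu_def mu3_def using mu3_bound[of "sz (bk x)" "bk x" kk "Suc nn"] sz_pos[OF bx] bx by auto
  also have "\<dots> = Suc (ps x) * (Suc nn * kk)" by simp
  also have "\<dots> \<le> nn * (Suc nn * kk)" using px sz_le[OF bx] by (intro mult_le_mono1) auto
  finally show ?thesis .
qed

lemma mu_C1: assumes x: "x < nn" and y: "y < nn" and ne: "C1 $$ (x,y) \<noteq> 0" shows "mu x < mu y"
proof -
  from bp[OF x] have bx: "bk x < kk" "ps x < sz (bk x)" by auto
  from bp[OF y] have by': "bk y < kk" "ps y < sz (bk y)" by auto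
  from ne have S: "Suc (rk (bk x)) = rk (bk y)" and d: "dd x = dd y" unfolding C1_index[OF x y] by (auto split: if_splits)
  from kap_less[OF by'(1) bx(1) rk_succ[OF by'(1) bx(1) S]]
  have le: "sz (bk x) \<le> sz (bk y)" and eqb: "sz (bk x) = sz (bk y) \<Longrightarrow> bk x < bk y" by auto
  show ?thesis
  proof (rule mu_less[OF x y])
    show "ps x < ps y \<or> (ps x = ps y \<and> sz (bk y) < sz (bk x)) \<or> (ps x = ps y \<and> sz (bk x) = sz (bk y) \<and> bk x < bk y)"
    proof (cases "ps x < ps y")
      case False
      then have "ps x = ps y" "sz (bk x) = sz (bk y)" using d le bx by' unfolding dd_def by linarith+
      then show ?thesis using eqb by auto
    qed simp
  qed
qed

lemma mu_B: assumes X: "commJ X" and tri: "\<And>b' b. b' < kk \<Longrightarrow> b < kk \<Longrightarrow> Dm X $$ (b',b) \<noteq> 0 \<Longrightarrow> b' < b"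
  and x: "x < nn" and y: "y < nn" and ne: "X $$ (x,y) \<noteq> 0" shows "mu x < mu y"
proof -
  from bp[OF x] have bx: "bk x < kk" "ps x < sz (bk x)" "ix (bk x) (ps x) = x" by auto
  from bp[OF y] have by': "bk y < kk" "ps y < sz (bk y)" "ix (bk y) (ps y) = y" by auto
  have ne': "X $$ (ix (bk x) (ps x), ix (bk y) (ps y)) \<noteq> 0" using ne bx(3) by'(3) by simp
  from supp1[OF X by'(1,2) bx(1,2) ne'] have p1: "ps x \<le> ps y" .
  from supp2[OF X by'(1,2) bx(1,2) ne'] have p2: "sz (bk y) - ps y \<le> sz (bk x) - ps x" .
  show ?thesis
  proof (rule mu_less[OF x y])
    show "ps x < ps y \<or> (ps x = ps y \<and> sz (bk y) < sz (bk x)) \<or> (ps x = ps y \<and> sz (bk x) = sz (bk y) \<and> bk x < bk y)"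
    proof (cases "ps x < ps y")
      case False
      then have pe: "ps x = ps y" using p1 by simp
      then have le: "sz (bk y) \<le> sz (bk x)" using p2 bx by' by linarith
      show ?thesis
      proof (cases "sz (bk y) < sz (bk x)")
        case False
        then have se: "sz (bk x) = sz (bk y)" using le by simp
        have "X $$ (ix (bk x) (ps x), ix (bk y) (ps x)) = X $$ (ix (bk x) 0, ix (bk y) 0)"
          by (rule toeplitz[OF X by'(1)], insert by'(2) bx(2) pe bx(1), auto)
        then have "Dm X $$ (bk x, bk y) \<noteq> 0" using ne' pe se unfolding Dm_index[OF bx(1) by'(1)] by simp
        from tri[OF bx(1) by'(1) this] show ?thesis using pe se by simp
      qed (simp add: pe)
    qed simp
  qed
qed

definition top :: "nat \<Rightarrow> nat" where "top b = ix b (sz b - 1)"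

lemma top_facts: assumes b: "b < kk" shows "top b < nn" "bk (top b) = b" "ps (top b) = sz b - 1" "dd (top b) = 1"
  using ixb[OF b, of "sz b - 1"] sz_pos[OF b] unfolding top_def dd_def by auto

lemma C1_unit_top: assumes b: "b < kk" and b'': "b'' < kk" and S: "Suc (rk b) = rk b''"
  shows "C1 *\<^sub>v unit_vec nn (top b'') = unit_vec nn (top b)"
proof (rule eq_vecI)
  fix x assume "x < dim_vec (unit_vec nn (top b))"
  then have x: "x < nn" by simp
  from bp[OF x] have bx: "bk x < kk" "ps x < sz (bk x)" by auto
  have "(Suc (rk (bk x)) = rk b'' \<and> dd x = 1) = (x = top b)"
  proof
    assume a: "Suc (rk (bk x)) = rk b'' \<and> dd x = 1"
    then have "rk (bk x) = rk b" using S by simp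
    then have e: "bk x = b" using rk_inj[OF bx(1) b] by simp
    have "ps x = sz b - 1" using a bx e unfolding dd_def by auto
    then show "x = top b" using eq_iff_bp[OF x top_facts(1)[OF b]] top_facts[OF b] e by simp
  next
    assume "x = top b" then show "Suc (rk (bk x)) = rk b'' \<and> dd x = 1" using top_facts[OF b] S by simp
  qed
  then show "(C1 *\<^sub>v unit_vec nn (top b'')) $ x = unit_vec nn (top b) $ x"
    unfolding mult_unit[OF C1_carrier top_facts(1)[OF b'']] using x C1_index[OF x top_facts(1)[OF b'']]
      top_facts[OF b''] top_facts[OF b] index_unit_vec(1)[OF top_facts(1)[OF b] x] by simp
qed simp

lemma J0_unit: assumes b: "b < kk" and p: "Suc p < sz b"
  shows "J0 *\<^sub>v unit_vec nn (ix b (Suc p)) = unit_vec nn (ix b p)"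
proof (rule eq_vecI)
  fix x assume "x < dim_vec (unit_vec nn (ix b p))"
  then have x: "x < nn" by simp
  have i1: "ix b (Suc p) < nn" "bk (ix b (Suc p)) = b" "ps (ix b (Suc p)) = Suc p" using ixb[OF b p] by auto
  have i0: "ix b p < nn" "bk (ix b p) = b" "ps (ix b p) = p" using ixb[OF b, of p] p by auto
  have "(bk x = b \<and> Suc p = Suc (ps x)) = (x = ix b p)"
    using eq_iff_bp[OF x i0(1)] i0 by auto
  then show "(J0 *\<^sub>v unit_vec nn (ix b (Suc p))) $ x = unit_vec nn (ix b p) $ x"
    unfolding mult_unit[OF J0_carrier i1(1)] using x J0_index[OF x i1(1)] i1 i0 by simp
qed simp

lemma cyc: assumes bm: "bm < kk" and rbm: "rk bm = kk - 1"
  shows "cyclic_vector_pair nn J0 C1 (unit_vec nn (top bm))"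
  unfolding cyclic_vector_pair_def
proof
  assume "\<exists>W. is_subspace nn W \<and> W \<noteq> carrier_vec nn \<and> invariant_under J0 W \<and> invariant_under C1 W \<and> unit_vec nn (top bm) \<in> W"
  then obtain W where W: "is_subspace nn W" and ne: "W \<noteq> carrier_vec nn" and iJ: "invariant_under J0 W"
    and iC: "invariant_under C1 W" and w: "unit_vec nn (top bm) \<in> W" by blast
  have tops: "\<forall>b<kk. rk b = kk - 1 - t \<longrightarrow> unit_vec nn (top b) \<in> W" if "t < kk" for t
    using that
  proof (induction t)
    case 0
    show ?case
    proof (intro allI impI)
      fix b assume b: "b < kk" and r: "rk b = kk - 1 - 0"
      then have "b = bm" using rk_inj[OF b bm] rbm by simp
      then show "unit_vec nn (top b) \<in> W" using w by simp
    qed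
  next
    case (Suc t)
    show ?case
    proof (intro allI impI)
      fix b assume b: "b < kk" and r: "rk b = kk - 1 - Suc t"
      have lt: "kk - 1 - t < kk" using Suc.prems by simp
      from rk_surj[OF lt] obtain b'' where b'': "b'' < kk" "rk b'' = kk - 1 - t" by auto
      from Suc.IH[rule_format, OF _ b''] Suc.prems have "unit_vec nn (top b'') \<in> W" by auto
      then have "C1 *\<^sub>v unit_vec nn (top b'') \<in> W" using iC unfolding invariant_under_def by auto
      moreover have "Suc (rk b) = rk b''" using r b'' Suc.prems by auto
      ultimately show "unit_vec nn (top b) \<in> W" using C1_unit_top[OF b b''(1)] by simp
    qed
  qed
  have alltops: "unit_vec nn (top b) \<in> W" if b: "b < kk" for b
    using tops[of "kk - 1 - rk b"] rk_lt[OF b] b by auto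
  have units: "unit_vec nn (ix b (sz b - 1 - d)) \<in> W" if b: "b < kk" and d: "d < sz b" for b d
    using d
  proof (induction d)
    case 0 then show ?case using alltops[OF b] unfolding top_def by simp
  next
    case (Suc d)
    have e: "Suc (sz b - 1 - Suc d) = sz b - 1 - d" using Suc.prems by auto
    have "J0 *\<^sub>v unit_vec nn (ix b (Suc (sz b - 1 - Suc d))) \<in> W"
      using Suc iJ e unfolding invariant_under_def by auto
    then show ?case using J0_unit[OF b, of "sz b - 1 - Suc d"] e Suc.prems sz_pos[OF b] by auto
  qed
  have "W = carrier_vec nn"
  proof (rule subspace_full[OF W])
    fix x assume x: "x < nn"
    from bp[OF x] have bx: "bk x < kk" "ps x < sz (bk x)" "ix (bk x) (ps x) = x" by auto
    have "sz (bk x) - 1 - (sz (bk x) - 1 - ps x) = ps x" using bx by auto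
    with units[OF bx(1), of "sz (bk x) - 1 - ps x"] bx show "unit_vec nn x \<in> W" by auto
  qed
  with ne show False by simp
qed

end

lemma Y_conj: fixes P Q Y :: "'a::comm_ring_1 mat"
  assumes P: "P \<in> carrier_mat m m" and Q: "Q \<in> carrier_mat m m" and Y: "Y \<in> carrier_mat m m" and QP: "Q * P = 1\<^sub>m m"
  shows "Q * (P * Y * Q) = Y * Q"
proof -
  have PY: "P * Y \<in> carrier_mat m m" using P Y by auto
  have "Q * (P * Y * Q) = Q * (P * Y) * Q" by (rule assoc_mult_mat[OF Q PY Q, symmetric])
  also have "Q * (P * Y) = Q * P * Y" by (rule assoc_mult_mat[OF Q P Y, symmetric])
  also have "\<dots> = Y" using QP Y by simp
  finally show ?thesis .
qed

lemma conj_mult: fixes P Q X Y :: "'a::comm_ring_1 mat"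
  assumes P: "P \<in> carrier_mat m m" and Q: "Q \<in> carrier_mat m m" and X: "X \<in> carrier_mat m m"
    and Y: "Y \<in> carrier_mat m m" and QP: "Q * P = 1\<^sub>m m"
  shows "P * X * Q * (P * Y * Q) = P * (X * Y) * Q"
proof -
  have PX: "P * X \<in> carrier_mat m m" using P X by auto
  have PYQ: "P * Y * Q \<in> carrier_mat m m" using P Y Q by auto
  have "P * X * Q * (P * Y * Q) = P * X * (Q * (P * Y * Q))" by (rule assoc_mult_mat[OF PX Q PYQ])
  also have "\<dots> = P * X * (Y * Q)" using Y_conj[OF P Q Y QP] by simp
  also have "\<dots> = P * X * Y * Q" by (rule assoc_mult_mat[OF PX Y Q, symmetric])
  also have "P * X * Y = P * (X * Y)" by (rule assoc_mult_mat[OF P X Y])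
  finally show ?thesis .
qed

lemma conj_add: fixes P Q X Y :: "'a::comm_ring_1 mat"
  assumes P: "P \<in> carrier_mat m m" and Q: "Q \<in> carrier_mat m m" and X: "X \<in> carrier_mat m m"
    and Y: "Y \<in> carrier_mat m m"
  shows "P * X * Q + P * Y * Q = P * (X + Y) * Q"
proof -
  have "P * (X + Y) = P * X + P * Y" by (rule mult_add_distrib_mat[OF P X Y])
  moreover have "(P * X + P * Y) * Q = P * X * Q + P * Y * Q"
    by (rule add_mult_distrib_mat[of _ m m], insert P X Y Q, auto)
  ultimately show ?thesis by simp
qed

lemma conj_smult: fixes P Q X :: "'a::comm_ring_1 mat"
  assumes P: "P \<in> carrier_mat m m" and Q: "Q \<in> carrier_mat m m" and X: "X \<in> carrier_mat m m"
  shows "k \<cdot>\<^sub>m (P * X * Q) = P * (k \<cdot>\<^sub>m X) * Q"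
proof -
  have "P * (k \<cdot>\<^sub>m X) = k \<cdot>\<^sub>m (P * X)" by (rule mult_smult_distrib[OF P X])
  moreover have "(k \<cdot>\<^sub>m (P * X)) * Q = k \<cdot>\<^sub>m (P * X * Q)"
    by (rule mult_smult_assoc_mat, insert P X Q, auto)
  ultimately show ?thesis by simp
qed

lemma conj_comp: fixes P1 P2 Q1 Q2 X :: "'a::comm_ring_1 mat"
  assumes P1: "P1 \<in> carrier_mat m m" and P2: "P2 \<in> carrier_mat m m" and Q1: "Q1 \<in> carrier_mat m m"
    and Q2: "Q2 \<in> carrier_mat m m" and X: "X \<in> carrier_mat m m"
  shows "P1 * P2 * X * (Q2 * Q1) = P1 * (P2 * X * Q2) * Q1"
proof -
  have P2X: "P2 * X \<in> carrier_mat m m" using P2 X by auto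
  have P2XQ2: "P2 * X * Q2 \<in> carrier_mat m m" using P2X Q2 by auto
  have P12X: "P1 * P2 * X \<in> carrier_mat m m" using P1 P2 X by auto
  have P1P2X: "P1 * (P2 * X) \<in> carrier_mat m m" using P1 P2X by auto
  have s1: "P1 * P2 * X * (Q2 * Q1) = P1 * P2 * X * Q2 * Q1" by (rule assoc_mult_mat[OF P12X Q2 Q1, symmetric])
  have e1: "P1 * P2 * X = P1 * (P2 * X)" by (rule assoc_mult_mat[OF P1 P2 X])
  have e2: "P1 * (P2 * X) * Q2 = P1 * (P2 * X * Q2)" by (rule assoc_mult_mat[OF P1 P2X Q2])
  have "P1 * P2 * X * (Q2 * Q1) = P1 * P2 * X * Q2 * Q1" by (rule s1)
  also have "\<dots> = P1 * (P2 * X) * Q2 * Q1" using e1 by simp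
  also have "\<dots> = P1 * (P2 * X * Q2) * Q1" using e2 by simp
  finally show ?thesis .
qed

lemma conj_pow: fixes P Q X :: "'a::comm_ring_1 mat"
  assumes P: "P \<in> carrier_mat m m" and Q: "Q \<in> carrier_mat m m" and X: "X \<in> carrier_mat m m"
    and PQ: "P * Q = 1\<^sub>m m" and QP: "Q * P = 1\<^sub>m m"
  shows "(P * X * Q) ^\<^sub>m t = P * X ^\<^sub>m t * Q"
proof -
  have "similar_mat_wit (P * X * Q) X P Q"
    unfolding similar_mat_wit_def Let_def using P Q X PQ QP by auto
  from similar_mat_wit_pow_id[OF this] show ?thesis .
qed

lemma conj_vec: fixes P Q X :: "'a::comm_ring_1 mat"
  assumes P: "P \<in> carrier_mat m m" and Q: "Q \<in> carrier_mat m m" and X: "X \<in> carrier_mat m m"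
    and v: "v \<in> carrier_vec m" and QP: "Q * P = 1\<^sub>m m"
  shows "(P * X * Q) *\<^sub>v (P *\<^sub>v v) = P *\<^sub>v (X *\<^sub>v v)"
proof -
  have PX: "P * X \<in> carrier_mat m m" using P X by auto
  have PXQ: "P * X * Q \<in> carrier_mat m m" using PX Q by auto
  have s1: "(P * X * Q) *\<^sub>v (P *\<^sub>v v) = (P * X * Q * P) *\<^sub>v v" by (rule assoc_mult_mat_vec[OF PXQ P v, symmetric])
  have e1: "P * X * Q * P = P * X * (Q * P)" by (rule assoc_mult_mat[OF PX Q P])
  have e2: "P * X * (Q * P) = P * X" using QP right_mult_one_mat[OF PX] by simp
  have e3: "(P * X) *\<^sub>v v = P *\<^sub>v (X *\<^sub>v v)" by (rule assoc_mult_mat_vec[OF P X v])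
  show ?thesis unfolding s1 e1 e2 e3 ..
qed

lemma cyclic_transfer:
  assumes R: "R \<in> carrier_mat n n" and R': "R' \<in> carrier_mat n n" and RR: "R * R' = 1\<^sub>m n" and RR': "R' * R = 1\<^sub>m n"
    and A': "A' \<in> carrier_mat n n" and C': "C' \<in> carrier_mat n n" and w': "w' \<in> carrier_vec n"
    and cyc: "cyclic_vector_pair n A' C' w'"
  shows "cyclic_vector_pair n (R * A' * R') (R * C' * R') (R *\<^sub>v w')"
  unfolding cyclic_vector_pair_def
proof
  assume "\<exists>W. is_subspace n W \<and> W \<noteq> carrier_vec n \<and> invariant_under (R * A' * R') W \<and> invariant_under (R * C' * R') W \<and> R *\<^sub>v w' \<in> W"
  then obtain W where W: "is_subspace n W" and ne: "W \<noteq> carrier_vec n" and iA: "invariant_under (R * A' * R') W"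
    and iC: "invariant_under (R * C' * R') W" and w: "R *\<^sub>v w' \<in> W" by blast
  have Wc: "W \<subseteq> carrier_vec n" using W unfolding is_subspace_def by auto
  define W' where "W' = (\<lambda>v. R' *\<^sub>v v) ` W"
  have bk1: "R *\<^sub>v (R' *\<^sub>v v) = v" if "v \<in> carrier_vec n" for v
  proof -
    have "R *\<^sub>v (R' *\<^sub>v v) = (R * R') *\<^sub>v v" using R R' that by simp
    then show ?thesis using RR that by simp
  qed
  have bk2: "R' *\<^sub>v (R *\<^sub>v v) = v" if "v \<in> carrier_vec n" for v
  proof -
    have "R' *\<^sub>v (R *\<^sub>v v) = (R' * R) *\<^sub>v v" using R R' that by simp
    then show ?thesis using RR' that by simp
  qed
  have inv: "invariant_under X' W'" if X': "X' \<in> carrier_mat n n" and iX: "invariant_under (R * X' * R') W" for X'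
    unfolding invariant_under_def W'_def
  proof
    fix u assume "u \<in> (\<lambda>v. R' *\<^sub>v v) ` W"
    then obtain v where v: "v \<in> W" and u: "u = R' *\<^sub>v v" by auto
    have vc: "v \<in> carrier_vec n" using v Wc by auto
    have "(R * X' * R') *\<^sub>v v \<in> W" using iX v unfolding invariant_under_def by auto
    moreover have "R' *\<^sub>v ((R * X' * R') *\<^sub>v v) = X' *\<^sub>v u"
    proof -
      have "(R * X' * R') *\<^sub>v v = R *\<^sub>v (X' *\<^sub>v (R' *\<^sub>v v))"
        using conj_vec[OF R R' X' _ RR', of "R' *\<^sub>v v"] bk1[OF vc] R' vc by simp
      then show ?thesis using bk2[of "X' *\<^sub>v (R' *\<^sub>v v)"] X' R' vc u by simp
    qed
    ultimately show "X' *\<^sub>v u \<in> (\<lambda>v. R' *\<^sub>v v) ` W" by (metis image_eqI)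
  qed
  have sub: "is_subspace n W'"
    unfolding is_subspace_def
  proof (intro conjI ballI allI)
    show "W' \<subseteq> carrier_vec n" unfolding W'_def using R' Wc by auto
    have "0\<^sub>v n \<in> W" using W unfolding is_subspace_def by auto
    moreover have "R' *\<^sub>v 0\<^sub>v n = 0\<^sub>v n" using R' by auto
    ultimately show "0\<^sub>v n \<in> W'" unfolding W'_def by (metis image_eqI)
  next
    fix u1 u2 assume "u1 \<in> W'" "u2 \<in> W'"
    then obtain v1 v2 where v: "v1 \<in> W" "v2 \<in> W" and u: "u1 = R' *\<^sub>v v1" "u2 = R' *\<^sub>v v2" unfolding W'_def by auto
    have "v1 + v2 \<in> W" using W v unfolding is_subspace_def by auto
    moreover have "R' *\<^sub>v (v1 + v2) = u1 + u2" using mult_add_distrib_mat_vec[OF R'] v Wc u by auto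
    ultimately show "u1 + u2 \<in> W'" unfolding W'_def by (metis image_eqI)
  next
    fix c :: complex and u assume "u \<in> W'"
    then obtain v where v: "v \<in> W" and u: "u = R' *\<^sub>v v" unfolding W'_def by auto
    have "c \<cdot>\<^sub>v v \<in> W" using W v unfolding is_subspace_def by auto
    moreover have "R' *\<^sub>v (c \<cdot>\<^sub>v v) = c \<cdot>\<^sub>v u" using mult_mat_vec[OF R'] v Wc u by auto
    ultimately show "c \<cdot>\<^sub>v u \<in> W'" unfolding W'_def by (metis image_eqI)
  qed
  have w'W: "w' \<in> W'" unfolding W'_def using w bk2[OF w'] by (metis image_eqI)
  have ne': "W' \<noteq> carrier_vec n"
  proof
    assume eq: "W' = carrier_vec n"
    have "carrier_vec n \<subseteq> W"
    proof
      fix v :: "complex vec" assume v: "v \<in> carrier_vec n"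
      then have "R' *\<^sub>v v \<in> W'" using eq R' by auto
      then obtain u where u: "u \<in> W" "R' *\<^sub>v u = R' *\<^sub>v v" unfolding W'_def by auto
      have uc: "u \<in> carrier_vec n" using u Wc by auto
      have "u = R *\<^sub>v (R' *\<^sub>v u)" using bk1[OF uc] by simp
      also have "\<dots> = v" using u bk1 v by simp
      finally show "v \<in> W" using u by simp
    qed
    with Wc ne show False by auto
  qed
  from cyc sub ne' inv[OF A' iA] inv[OF C' iC] w'W show False unfolding cyclic_vector_pair_def by blast
qed

lemma inv_comp: fixes P1 P2 Q1 Q2 :: "'a::comm_ring_1 mat"
  assumes P1: "P1 \<in> carrier_mat m m" and P2: "P2 \<in> carrier_mat m m" and Q1: "Q1 \<in> carrier_mat m m"
    and Q2: "Q2 \<in> carrier_mat m m" and e2: "P2 * Q2 = 1\<^sub>m m" and e1: "P1 * Q1 = 1\<^sub>m m"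
  shows "P1 * P2 * (Q2 * Q1) = 1\<^sub>m m"
proof -
  have I: "1\<^sub>m m \<in> carrier_mat m m" by simp
  have "P1 * P2 * (Q2 * Q1) = P1 * P2 * 1\<^sub>m m * (Q2 * Q1)" using P1 P2 by simp
  also have "\<dots> = P1 * (P2 * 1\<^sub>m m * Q2) * Q1" by (rule conj_comp[OF P1 P2 Q1 Q2 I])
  also have "\<dots> = 1\<^sub>m m" using P2 e2 e1 P1 by simp
  finally show ?thesis .
qed

lemma cyclic_zero: "cyclic_vector_pair 0 A C w"
  unfolding cyclic_vector_pair_def
proof
  assume "\<exists>W. is_subspace 0 W \<and> W \<noteq> carrier_vec 0 \<and> invariant_under A W \<and> invariant_under C W \<and> w \<in> W"
  then obtain W where W: "is_subspace 0 W" and ne: "W \<noteq> carrier_vec 0" by blast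
  have "carrier_vec 0 \<subseteq> W"
  proof
    fix v :: "complex vec" assume "v \<in> carrier_vec 0"
    then have "v = 0\<^sub>v 0" by (intro eq_vecI) auto
    then show "v \<in> W" using W unfolding is_subspace_def by auto
  qed
  with W ne show False unfolding is_subspace_def by auto
qed

theorem lemma2p3:
  fixes n :: nat and B1 B2 :: "complex mat"
  assumes "B1 \<in> carrier_mat n n" and "B2 \<in> carrier_mat n n"
    and "B1 * B2 = B2 * B1"
    and "nilpotent_mat B1" and "nilpotent_mat B2"
  shows "\<exists>B2' w. B2' \<in> carrier_mat n n \<and> w \<in> carrier_vec n \<and> nilpotent_mat B2' \<and>
           B1 * B2' = B2' * B1 \<and>
           (\<forall>\<alpha> \<beta> :: complex. nilpotent_mat (\<alpha> \<cdot>\<^sub>m B2 + \<beta> \<cdot>\<^sub>m B2')) \<and>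
           cyclic_vector_pair n B1 B2' w"
proof -
  note A = assms(1) and B = assms(2) and AB = assms(3)
  from assms(4) A obtain N1 where N1: "B1 ^\<^sub>m N1 = 0\<^sub>m n n" unfolding nilpotent_mat_def by auto
  from assms(5) B obtain N2 where N2: "B2 ^\<^sub>m N2 = 0\<^sub>m n n" unfolding nilpotent_mat_def by auto
  from nilp_jordan[OF A N1] obtain ms P Q where js: "jstr ms" and m: "sum_list ms = n"
    and P: "P \<in> carrier_mat n n" and Q: "Q \<in> carrier_mat n n" and PQ: "P * Q = 1\<^sub>m n" and QP: "Q * P = 1\<^sub>m n"
    and AJ: "B1 = P * jstr.J0 ms * Q" by blast
  interpret jstr ms by (rule js)
  have nn: "n = nn" using m by simp
  note A = A[unfolded nn] and B = B[unfolded nn] and N2 = N2[unfolded nn]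
  note P = P[unfolded nn] and Q = Q[unfolded nn] and PQ = PQ[unfolded nn] and QP = QP[unfolded nn]
  define B0 where "B0 = Q * B2 * P"
  have J0eq: "Q * B1 * P = J0" unfolding AJ by (rule sim_cancel[OF P Q J0_carrier QP])
  have B0c: "B0 \<in> carrier_mat nn nn" unfolding B0_def using Q B P by auto
  have cB0: "commJ B0"
  proof -
    have "B0 * J0 = Q * (B2 * B1) * P" unfolding B0_def J0eq[symmetric] by (rule conj_mult[OF Q P B A PQ])
    moreover have "J0 * B0 = Q * (B1 * B2) * P" unfolding B0_def J0eq[symmetric] by (rule conj_mult[OF Q P A B PQ])
    ultimately show ?thesis unfolding commJ_def using B0c AB by simp
  qed
  have nilB0: "B0 ^\<^sub>m N2 = 0\<^sub>m nn nn"
    unfolding B0_def conj_pow[OF Q P B QP PQ] N2 using Q P by simp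
  define D where "D = Dm B0"
  have Dnil: "D ^\<^sub>m N2 = 0\<^sub>m kk kk" unfolding D_def Dm_pow[OF cB0, symmetric] nilB0 Dm_zero ..
  have Dgr: "ms ! i = ms ! j" if "i < kk" "j < kk" "D $$ (i,j) \<noteq> 0" for i j
    using that unfolding D_def Dm_index[OF that(1,2)] by (auto split: if_splits)
  from group_triang[where D="Dm B0" and c="\<lambda>b. ms ! b" and k=kk and N=N2, OF Dm_carrier Dnil[unfolded D_def] Dgr[unfolded D_def]]
  obtain U U' where
    Uc: "U \<in> carrier_mat kk kk" and U'c: "U' \<in> carrier_mat kk kk" and UU: "U * U' = 1\<^sub>m kk" and UU': "U' * U = 1\<^sub>m kk"
    and Ug: "\<forall>i<kk. \<forall>j<kk. U $$ (i,j) \<noteq> 0 \<longrightarrow> ms ! i = ms ! j"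
    and U'g: "\<forall>i<kk. \<forall>j<kk. U' $$ (i,j) \<noteq> 0 \<longrightarrow> ms ! i = ms ! j"
    and tri: "\<forall>i<kk. \<forall>j<kk. (U' * Dm B0 * U) $$ (i,j) \<noteq> 0 \<longrightarrow> i < j" by blast
  have gU: "grp U" and gU': "grp U'" unfolding grp_def using Uc U'c Ug U'g by auto
  define Qa where "Qa = Qm U"
  define Qb where "Qb = Qm U'"
  have Qac: "Qa \<in> carrier_mat nn nn" and Qbc: "Qb \<in> carrier_mat nn nn" unfolding Qa_def Qb_def by auto
  have QaQb: "Qa * Qb = 1\<^sub>m nn" unfolding Qa_def Qb_def Qm_mult[OF gU U'c] UU Qm_one ..
  have QbQa: "Qb * Qa = 1\<^sub>m nn" unfolding Qa_def Qb_def Qm_mult[OF gU' Uc] UU' Qm_one ..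
  have cQa: "commJ Qa" and cQb: "commJ Qb" unfolding Qa_def Qb_def using Qm_commJ gU gU' by auto
  define B1' where "B1' = Qb * B0 * Qa"
  have cB1': "commJ B1'" unfolding B1'_def by (intro commJ_mult cQa cQb cB0)
  have DB1': "Dm B1' = U' * Dm B0 * U"
    unfolding B1'_def Dm_mult[OF commJ_mult[OF cQb cB0] cQa] Dm_mult[OF cQb cB0]
    unfolding Qa_def Qb_def Dm_Qm[OF gU] Dm_Qm[OF gU'] ..
  have triB: "b' < b" if "b' < kk" "b < kk" "Dm B1' $$ (b',b) \<noteq> 0" for b' b
    using tri that unfolding DB1' by auto
  define R where "R = P * Qa"
  define R' where "R' = Qb * Q"
  have Rc: "R \<in> carrier_mat nn nn" and R'c: "R' \<in> carrier_mat nn nn" unfolding R_def R'_def using P Q Qac Qbc by auto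
  have RR: "R * R' = 1\<^sub>m nn" unfolding R_def R'_def by (rule inv_comp[OF P Qac Q Qbc QaQb PQ])
  have RR': "R' * R = 1\<^sub>m nn" unfolding R_def R'_def by (rule inv_comp[OF Qbc Q Qac P QP QbQa])
  have B2eq: "R * B1' * R' = B2"
  proof -
    have B1'c: "B1' \<in> carrier_mat nn nn" using cB1' commJ_carrier by auto
    have "R * B1' * R' = P * (Qa * B1' * Qb) * Q" unfolding R_def R'_def by (rule conj_comp[OF P Qac Q Qbc B1'c])
    also have "Qa * B1' * Qb = B0" unfolding B1'_def by (rule sim_cancel[OF Qbc Qac B0c QaQb])
    also have "P * B0 * Q = B2" unfolding B0_def by (rule sim_cancel[OF Q P B PQ])
    finally show ?thesis .
  qed
  have B1eq: "R * J0 * R' = B1"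
  proof -
    have "R * J0 * R' = P * (Qa * J0 * Qb) * Q" unfolding R_def R'_def by (rule conj_comp[OF P Qac Q Qbc J0_carrier])
    also have "Qa * J0 * Qb = J0"
    proof -
      have "Qa * J0 = J0 * Qa" using cQa unfolding commJ_def by auto
      then have "Qa * J0 * Qb = J0 * Qa * Qb" by simp
      also have "\<dots> = J0 * (Qa * Qb)" by (rule assoc_mult_mat[OF J0_carrier Qac Qbc])
      also have "\<dots> = J0" using QaQb by simp
      finally show ?thesis .
    qed
    finally show ?thesis using AJ by simp
  qed
  define C where "C = R * C1 * R'"
  have Cc: "C \<in> carrier_mat nn nn" unfolding C_def using Rc R'c by auto
  define M where "M = nn * (Suc nn * kk)"
  have nilC1: "C1 ^\<^sub>m M = 0\<^sub>m nn nn" unfolding M_def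
    by (rule rank_nilp[OF C1_carrier, of mu], insert mu_C1 mu_bound, auto)
  have nilC: "nilpotent_mat C"
  proof -
    have "C ^\<^sub>m M = R * C1 ^\<^sub>m M * R'" unfolding C_def by (rule conj_pow[OF Rc R'c C1_carrier RR RR'])
    also have "\<dots> = 0\<^sub>m nn nn" unfolding nilC1 using Rc R'c by simp
    finally show ?thesis unfolding nilpotent_mat_def using Cc by auto
  qed
  have commC: "B1 * C = C * B1"
  proof -
    have "B1 * C = R * (J0 * C1) * R'" unfolding B1eq[symmetric] C_def by (rule conj_mult[OF Rc R'c J0_carrier C1_carrier RR'])
    moreover have "C * B1 = R * (C1 * J0) * R'" unfolding B1eq[symmetric] C_def by (rule conj_mult[OF Rc R'c C1_carrier J0_carrier RR'])
    moreover have "C1 * J0 = J0 * C1" using C1_comm unfolding commJ_def by auto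
    ultimately show ?thesis by simp
  qed
  have nilLC: "nilpotent_mat (\<alpha> \<cdot>\<^sub>m B2 + \<beta> \<cdot>\<^sub>m C)" for \<alpha> \<beta> :: complex
  proof -
    have B1'c: "B1' \<in> carrier_mat nn nn" using cB1' commJ_carrier by auto
    define X where "X = \<alpha> \<cdot>\<^sub>m B1' + \<beta> \<cdot>\<^sub>m C1"
    have Xc: "X \<in> carrier_mat nn nn" unfolding X_def using B1'c by auto
    have eq: "\<alpha> \<cdot>\<^sub>m B2 + \<beta> \<cdot>\<^sub>m C = R * X * R'"
      unfolding B2eq[symmetric] C_def X_def conj_smult[OF Rc R'c B1'c] conj_smult[OF Rc R'c C1_carrier]
      by (rule conj_add[OF Rc R'c], insert B1'c, auto)
    have nilX: "X ^\<^sub>m M = 0\<^sub>m nn nn" unfolding M_def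
    proof (rule rank_nilp[OF Xc, of mu])
      fix i j assume i: "i < nn" and j: "j < nn" and ne: "X $$ (i,j) \<noteq> 0"
      then have "B1' $$ (i,j) \<noteq> 0 \<or> C1 $$ (i,j) \<noteq> 0" unfolding X_def using B1'c by auto
      then show "mu i < mu j" using mu_B[OF cB1' triB i j] mu_C1[OF i j] by auto
    qed (rule mu_bound)
    have "(\<alpha> \<cdot>\<^sub>m B2 + \<beta> \<cdot>\<^sub>m C) ^\<^sub>m M = R * X ^\<^sub>m M * R'" unfolding eq by (rule conj_pow[OF Rc R'c Xc RR RR'])
    also have "\<dots> = 0\<^sub>m nn nn" unfolding nilX using Rc R'c by simp
    finally show ?thesis unfolding nilpotent_mat_def using B Cc by auto
  qed
  obtain w1 where w1c: "w1 \<in> carrier_vec nn" and cyc1: "cyclic_vector_pair nn J0 C1 w1"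
  proof (cases "kk = 0")
    case True
    then have z: "ms = []" by simp
    have "cyclic_vector_pair nn J0 C1 (0\<^sub>v nn)" unfolding z using cyclic_zero by simp
    then show ?thesis using that[of "0\<^sub>v nn"] by simp
  next
    case False
    then have "kk - 1 < kk" by simp
    from rk_surj[OF this] obtain bm where bm: "bm < kk" "rk bm = kk - 1" by auto
    show ?thesis using that[OF _ cyc[OF bm]] top_facts(1)[OF bm(1)] by auto
  qed
  have cyc: "cyclic_vector_pair nn B1 C (R *\<^sub>v w1)"
    using cyclic_transfer[OF Rc R'c RR RR' J0_carrier C1_carrier w1c cyc1] unfolding B1eq C_def[symmetric] .
  show ?thesis unfolding nn
    by (intro exI[of _ C] exI[of _ "R *\<^sub>v w1"] conjI allI, insert Cc Rc w1c nilC commC nilLC cyc, auto)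
qed

end
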